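(* Let $n,m$ be positive integers and $\mathbf a\in\mathbb N^n$. Then $$v^{(n,m)}(\mathbf a)=\sum_{\mathbf j\in\{0,1\}^n:\ \chi(\mathbf a)\trianglerighteq_1\mathbf j} v^{(n,m-1)}(\mathbf j).$$
   Context: $G(n,m)$ is the directed graph with vertex set $\{(i,j):1\le i\le n,\ 0\le j\le m\}\cup\{s\}$ and edges $((i,j),(i,j+1))$ for $1\le i\le n$, $0\le j\le m-1$; $((i,j),(i+1,j))$ for $1\le i\le n-1$, $0\le j\le m$; and $((n,j),s)$ for $0\le j\le m$. $\mathcal F_{G(n,m)}(\mathbf a)$ is the set of nonnegative real edge weightings such that at each vertex outflow minus inflow equals its netflow: $a_i$ at $(i,0)$, $-\sum_i a_i$ at $s$, $0$ elsewhere. $v^{(n,m)}(\mathbf a)$ denotes the number of vertices of $\mathcal F_{G(n,m)}(\mathbf a)$, with the convention $v^{(n,0)}(\mathbf j)=1$. $\chi(\mathbf a)\in\{0,1\}^n$ is the vector with $\chi(\mathbf a)_i=1$ iff $a_i>0$. For $\mathbf v,\mathbf w\in\mathbb N^n$, $\mathbf v\trianglerighteq\mathbf w$ (dominance) means $\sum_{k\le i}v_k\ge\sum_{k\le i}w_k$ for all $i$. For $\mathbf v,\mathbf w\in\mathbb N^n$ with $\mathbf v\trianglerighteq\mathbf w$ and $\chi(\mathbf v)\trianglerighteq\chi(\mathbf w)$, let $Z_{\mathbf v}=\{i:v_i=0\}$, $Z_{\mathbf w}=\{i:w_i=0\}$, and build the matching $M\subseteq Z_{\mathbf v}\times Z_{\mathbf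 w}$ by repeatedly taking the largest unmatched index $i'\in Z_{\mathbf v}$ and matching it to the largest unmatched index of $Z_{\mathbf w}$ that is $\le i'$, until all of $Z_{\mathbf v}$ is matched. Set $z=\max\{\max\{i-j:(i,j)\in M\},1\}$; we write $\mathbf v\trianglerighteq_z\mathbf w$. In particular $\mathbf v\trianglerighteq_1\mathbf w$ means $\mathbf v\trianglerighteq\mathbf w$, $\chi(\mathbf v)\trianglerighteq\chi(\mathbf w)$, and $i-j\le1$ for all $(i,j)\in M$. *)

theory Defs
  imports Complex_Main
begin

text \<open>Vertices of G(n,m): V i j stands for (i,j); S is the sink s.\<close>
datatype gv = V nat nat | S

definition gverts :: "nat \<Rightarrow> nat \<Rightarrow> gv set" where
  "gverts n m = {V i j | i j. 1 \<le> i \<and> i \<le> n \<and> j \<le> m} \<union> {S}"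

definition gedges :: "nat \<Rightarrow> nat \<Rightarrow> (gv \<times> gv) set" where
  "gedges n m =
     {(V i j, V i (j+1)) | i j. 1 \<le> i \<and> i \<le> n \<and> j < m}
   \<union> {(V i j, V (i+1) j) | i j. 1 \<le> i \<and> i < n \<and> j \<le> m}
   \<union> {(V n j, S) | j. j \<le> m}"

text \<open>Netflow: a_i at (i,0), minus the total at s, 0 elsewhere.
  The vector a in N^n is a list of length n; a_i = a ! (i-1).\<close>
definition netflow :: "nat \<Rightarrow> nat list \<Rightarrow> gv \<Rightarrow> real" where
  "netflow n a x = (case x of
      V i j \<Rightarrow> (if j = 0 \<and> 1 \<le> i \<and> i \<le> n then real (a ! (i-1)) else 0)
    | S \<Rightarrow> - real (sum_list a))"

text \<open>Flow polytope: nonnegative edge weightings (functions on pairs of vertices,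
  zero off the edge set) satisfying outflow - inflow = netflow at every vertex.\<close>
definition flow_polytope :: "nat \<Rightarrow> nat \<Rightarrow> nat list \<Rightarrow> (gv \<times> gv \<Rightarrow> real) set" where
  "flow_polytope n m a = {f.
      (\<forall>e. e \<notin> gedges n m \<longrightarrow> f e = 0)
    \<and> (\<forall>e\<in>gedges n m. 0 \<le> f e)
    \<and> (\<forall>x\<in>gverts n m.
          (\<Sum>e\<in>{e\<in>gedges n m. fst e = x}. f e) - (\<Sum>e\<in>{e\<in>gedges n m. snd e = x}. f e)
          = netflow n a x)}"

definition extreme_points :: "('a \<Rightarrow> real) set \<Rightarrow> ('a \<Rightarrow> real) set" where
  "extreme_points P = {x \<in> P. \<not> (\<exists>y\<in>P. \<exists>z\<in>P. \<exists>t::real. y \<noteq> z \<and> 0 < t \<and> t < 1 \<and>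
                                     x = (\<lambda>e. (1 - t) * y e + t * z e))}"

text \<open>v^(n,m)(a), with the convention v^(n,0)(j) = 1.\<close>
definition num_vertices :: "nat \<Rightarrow> nat \<Rightarrow> nat list \<Rightarrow> nat" where
  "num_vertices n m a = (if m = 0 then 1 else card (extreme_points (flow_polytope n m a)))"

definition chi :: "nat list \<Rightarrow> nat list" where
  "chi a = map (\<lambda>x. if 0 < x then 1 else 0) a"

definition dominates :: "nat list \<Rightarrow> nat list \<Rightarrow> bool" where
  "dominates v w \<longleftrightarrow> (\<forall>i \<le> length v. sum_list (take i w) \<le> sum_list (take i v))"

text \<open>Zero index set, 1-based.\<close>
definition zeros :: "nat list \<Rightarrow> nat set" where
  "zeros v = {i. 1 \<le> i \<and> i \<le> length v \<and> v ! (i-1) = 0}"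

fun greedy_match :: "nat list \<Rightarrow> nat set \<Rightarrow> (nat \<times> nat) list option" where
  "greedy_match [] A = Some []"
| "greedy_match (i # is) A =
     (let C = {j \<in> A. j \<le> i} in
      if C = {} then None
      else (let j = Max C in map_option (Cons (i, j)) (greedy_match is (A - {j}))))"

definition matching :: "nat list \<Rightarrow> nat list \<Rightarrow> (nat \<times> nat) list option" where
  "matching v w = greedy_match (rev (sorted_list_of_set (zeros v))) (zeros w)"

definition dominates_z :: "nat list \<Rightarrow> nat list \<Rightarrow> nat \<Rightarrow> bool" where
  "dominates_z v w z \<longleftrightarrow> length v = length w \<and> dominates v w \<and> dominates (chi v) (chi w) \<and>
     (\<exists>M. matching v w = Some M \<and> z = Max ({i - j | i j. (i, j) \<in> set M} \<union> {1}))"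

end

theory Submission
  imports Defs
begin


definition sh :: "gv \<Rightarrow> gv" where "sh x = (case x of V i j \<Rightarrow> V i (Suc j) | S \<Rightarrow> S)"
definition shift :: "(gv \<times> gv \<Rightarrow> real) \<Rightarrow> (gv \<times> gv \<Rightarrow> real)" where
  "shift f = (\<lambda>(x,y). f (sh x, sh y))"

lemma mem_gedges:
  assumes "1 \<le> n" shows "(x,y) \<in> gedges n m \<longleftrightarrow> (\<exists>i j. x = V i j \<and> 1 \<le> i \<and> i \<le> n \<and> j \<le> m \<and>
      ((j < m \<and> y = V i (Suc j)) \<or> (i < n \<and> y = V (Suc i) j) \<or> (i = n \<and> y = S)))"
  unfolding gedges_def using assms by auto

lemma mem_gverts: "x \<in> gverts n m \<longleftrightarrow> (\<exists>i j. x = V i j \<and> 1 \<le> i \<and> i \<le> n \<and> j \<le> m) \<or> x = S"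
  unfolding gverts_def by auto

definition rt :: "(gv \<times> gv \<Rightarrow> real) \<Rightarrow> nat \<Rightarrow> nat \<Rightarrow> real" where
  "rt f i j = f (V i j, V i (Suc j))"
definition dn :: "nat \<Rightarrow> (gv \<times> gv \<Rightarrow> real) \<Rightarrow> nat \<Rightarrow> nat \<Rightarrow> real" where
  "dn n f i j = (if i < n then f (V i j, V (Suc i) j) else f (V i j, S))"
definition outsum :: "nat \<Rightarrow> nat \<Rightarrow> (gv \<times> gv \<Rightarrow> real) \<Rightarrow> nat \<Rightarrow> nat \<Rightarrow> real" where
  "outsum n m f i j = (if j < m then rt f i j else 0) + dn n f i j"
definition insum :: "nat \<Rightarrow> (gv \<times> gv \<Rightarrow> real) \<Rightarrow> nat \<Rightarrow> nat \<Rightarrow> real" where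
  "insum n f i j = (if 0 < j then rt f i (j - 1) else 0) + (if 1 < i then dn n f (i - 1) j else 0)"

lemma outs_set:
  assumes "1 \<le> i" "i \<le> n" "j \<le> m"
  shows "{e \<in> gedges n m. fst e = V i j} =
     (if j < m then {(V i j, V i (Suc j))} else {}) \<union> {(V i j, if i < n then V (Suc i) j else S)}"
  using assms by (auto simp: mem_gedges[OF le_trans[OF assms(1,2)]])

lemma outs_sum:
  assumes "1 \<le> i" "i \<le> n" "j \<le> m"
  shows "(\<Sum>e\<in>{e \<in> gedges n m. fst e = V i j}. f e) = outsum n m f i j"
  unfolding outs_set[OF assms] outsum_def rt_def dn_def by auto

lemma ins_set:
  assumes "1 \<le> i" "i \<le> n" "j \<le> m"
  shows "{e \<in> gedges n m. snd e = V i j} =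
     (if 0 < j then {(V i (j - 1), V i j)} else {}) \<union> (if 1 < i then {(V (i - 1) j, V i j)} else {})"
  using assms by (auto simp: mem_gedges[OF le_trans[OF assms(1,2)]])

lemma ins_sum:
  assumes "1 \<le> i" "i \<le> n" "j \<le> m"
  shows "(\<Sum>e\<in>{e \<in> gedges n m. snd e = V i j}. f e) = insum n f i j"
  unfolding ins_set[OF assms] insum_def rt_def dn_def using assms by auto

lemma outS_set: "1 \<le> n \<Longrightarrow> {e \<in> gedges n m. fst e = S} = {}"
  by (auto simp: mem_gedges)

lemma inS_set: "1 \<le> n \<Longrightarrow> {e \<in> gedges n m. snd e = S} = (\<lambda>j. (V n j, S)) ` {..m}"
  by (auto simp: mem_gedges)

lemma inS_sum: "1 \<le> n \<Longrightarrow> (\<Sum>e\<in>{e \<in> gedges n m. snd e = S}. f e) = (\<Sum>j\<le>m. f (V n j, S))"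
  unfolding inS_set by (subst sum.reindex) (auto simp: inj_on_def)

definition flowc :: "nat \<Rightarrow> nat \<Rightarrow> nat list \<Rightarrow> (gv \<times> gv \<Rightarrow> real) \<Rightarrow> bool" where
  "flowc n m a f \<longleftrightarrow> (\<forall>e. e \<notin> gedges n m \<longrightarrow> f e = 0) \<and> (\<forall>e. 0 \<le> f e) \<and>
     (\<forall>i j. 1 \<le> i \<longrightarrow> i \<le> n \<longrightarrow> j \<le> m \<longrightarrow>
        outsum n m f i j - insum n f i j = (if j = 0 then real (a ! (i - 1)) else 0)) \<and>
     (\<Sum>j\<le>m. f (V n j, S)) = real (sum_list a)"

lemma fp_iff:
  assumes "1 \<le> n"
  shows "f \<in> flow_polytope n m a \<longleftrightarrow> flowc n m a f"
proof
  assume f: "f \<in> flow_polytope n m a"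
  then have z: "\<forall>e. e \<notin> gedges n m \<longrightarrow> f e = 0" and nn: "\<forall>e\<in>gedges n m. 0 \<le> f e"
    and c: "\<forall>x\<in>gverts n m.
          (\<Sum>e\<in>{e\<in>gedges n m. fst e = x}. f e) - (\<Sum>e\<in>{e\<in>gedges n m. snd e = x}. f e)
          = netflow n a x" unfolding flow_polytope_def by auto
  have "\<forall>e. 0 \<le> f e" using z nn by (metis order_refl)
  moreover have "\<forall>i j. 1 \<le> i \<longrightarrow> i \<le> n \<longrightarrow> j \<le> m \<longrightarrow>
        outsum n m f i j - insum n f i j = (if j = 0 then real (a ! (i - 1)) else 0)"
  proof (intro allI impI)
    fix i j assume h: "1 \<le> i" "i \<le> n" "j \<le> m"
    have "V i j \<in> gverts n m" using h by (auto simp: mem_gverts)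
    from c[rule_format, OF this] show "outsum n m f i j - insum n f i j = (if j = 0 then real (a ! (i - 1)) else 0)"
      using h by (simp add: outs_sum[OF h] ins_sum[OF h] netflow_def)
  qed
  moreover have "(\<Sum>j\<le>m. f (V n j, S)) = real (sum_list a)"
  proof -
    have "S \<in> gverts n m" by (auto simp: mem_gverts)
    with c show ?thesis by (auto simp: outS_set[OF assms] inS_sum[OF assms] netflow_def)
  qed
  ultimately show "flowc n m a f" using z unfolding flowc_def by blast
next
  assume "flowc n m a f"
  then have z: "\<forall>e. e \<notin> gedges n m \<longrightarrow> f e = 0" and nn: "\<forall>e. 0 \<le> f e"
    and c: "\<forall>i j. 1 \<le> i \<longrightarrow> i \<le> n \<longrightarrow> j \<le> m \<longrightarrow>
        outsum n m f i j - insum n f i j = (if j = 0 then real (a ! (i - 1)) else 0)"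
    and s: "(\<Sum>j\<le>m. f (V n j, S)) = real (sum_list a)"
    unfolding flowc_def by auto
  have "\<forall>x\<in>gverts n m.
          (\<Sum>e\<in>{e\<in>gedges n m. fst e = x}. f e) - (\<Sum>e\<in>{e\<in>gedges n m. snd e = x}. f e)
          = netflow n a x"
  proof
    fix x assume "x \<in> gverts n m"
    then consider i j where "x = V i j" "1 \<le> i" "i \<le> n" "j \<le> m" | "x = S"
      by (auto simp: mem_gverts)
    then show "(\<Sum>e\<in>{e\<in>gedges n m. fst e = x}. f e) - (\<Sum>e\<in>{e\<in>gedges n m. snd e = x}. f e)
          = netflow n a x"
    proof cases
      case 1
      then show ?thesis using c by (simp add: outs_sum ins_sum netflow_def)
    next
      case 2
      then show ?thesis using s by (auto simp: outS_set[OF assms] inS_sum[OF assms] netflow_def)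
    qed
  qed
  then show "f \<in> flow_polytope n m a" using z nn unfolding flow_polytope_def by auto
qed


fun cc :: "nat list \<Rightarrow> nat list \<Rightarrow> nat \<Rightarrow> nat" where
  "cc a w 0 = 0"
| "cc a w (Suc i) = (if w ! i = 1 then 0 else cc a w i + a ! i)"

fun bb :: "nat list \<Rightarrow> nat list \<Rightarrow> nat \<Rightarrow> nat" where
  "bb a w 0 = 0"
| "bb a w (Suc i) = (if w ! i = 1 then cc a w i + a ! i else 0)"

definition bvec :: "nat list \<Rightarrow> nat list \<Rightarrow> nat list" where
  "bvec a w = map (\<lambda>k. bb a w (Suc k)) [0..<length a]"

definition Adm :: "nat list \<Rightarrow> nat list set" where
  "Adm a = {w. length w = length a \<and> set w \<subseteq> {0,1} \<and>
      (\<forall>k<length a. w ! k = 1 \<longrightarrow> 0 < bb a w (Suc k))}"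

lemma cc_sum: "cc a w k + (\<Sum>i<k. bb a w (Suc i)) = (\<Sum>i<k. a ! i)"
  by (induction k) auto

lemma sum_list_bvec: "sum_list (bvec a w) = (\<Sum>i<length a. bb a w (Suc i))"
  unfolding bvec_def by (simp add: interv_sum_list_conv_sum_set_nat atLeast0LessThan)

lemma sum_list_nth: "sum_list a = (\<Sum>i<length a. a ! i)"
  by (simp add: sum_list_sum_nth atLeast0LessThan)

lemma length_bvec[simp]: "length (bvec a w) = length a"
  unfolding bvec_def by simp

lemma bvec_nth: "k < length a \<Longrightarrow> bvec a w ! k = bb a w (Suc k)"
  unfolding bvec_def by simp

lemma L_det:
  fixes B C :: "nat \<Rightarrow> real"
  assumes eq: "\<forall>i. 1 \<le> i \<longrightarrow> i \<le> n \<longrightarrow> B i + C i - (if 1 < i then C (i - 1) else 0) = real (a ! (i - 1))"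
    and pat: "\<forall>i. 1 \<le> i \<longrightarrow> i \<le> n \<longrightarrow> (w ! (i - 1) = 1 \<longrightarrow> C i = 0) \<and> (w ! (i - 1) \<noteq> 1 \<longrightarrow> B i = 0)"
  shows "\<forall>i. 1 \<le> i \<longrightarrow> i \<le> n \<longrightarrow> C i = real (cc a w i) \<and> B i = real (bb a w i)"
proof -
  have "\<forall>k. k < n \<longrightarrow> C (Suc k) = real (cc a w (Suc k)) \<and> B (Suc k) = real (bb a w (Suc k))"
  proof (intro allI)
    fix k show "k < n \<longrightarrow> C (Suc k) = real (cc a w (Suc k)) \<and> B (Suc k) = real (bb a w (Suc k))"
    proof (induction k)
      case 0
      then show ?case using eq[rule_format, of 1] pat[rule_format, of 1] by auto
    next
      case (Suc k)
      show ?case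
      proof
        assume k: "Suc k < n"
        then have ih: "C (Suc k) = real (cc a w (Suc k))" using Suc by auto
        have e: "B (Suc (Suc k)) + C (Suc (Suc k)) - C (Suc k) = real (a ! Suc k)"
          using eq[rule_format, of "Suc (Suc k)"] k by auto
        have p: "(w ! Suc k = 1 \<longrightarrow> C (Suc (Suc k)) = 0) \<and> (w ! Suc k \<noteq> 1 \<longrightarrow> B (Suc (Suc k)) = 0)"
          using pat[rule_format, of "Suc (Suc k)"] k by auto
        show "C (Suc (Suc k)) = real (cc a w (Suc (Suc k))) \<and> B (Suc (Suc k)) = real (bb a w (Suc (Suc k)))"
          using e p ih by (auto simp del: cc.simps simp: cc.simps(2)[of a w "Suc k"])
      qed
    qed
  qed
  show ?thesis
  proof (intro allI impI)
    fix i assume "1 \<le> i" "i \<le> n"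
    then obtain k where "i = Suc k" "k < n" by (cases i) auto
    then show "C i = real (cc a w i) \<and> B i = real (bb a w i)" using \<open>\<forall>k. k < n \<longrightarrow> _\<close> by blast
  qed
qed

definition join :: "nat \<Rightarrow> (nat \<Rightarrow> real) \<Rightarrow> (nat \<Rightarrow> real) \<Rightarrow> (gv \<times> gv \<Rightarrow> real) \<Rightarrow> (gv \<times> gv \<Rightarrow> real)" where
  "join n b c g = (\<lambda>(x,y). case x of S \<Rightarrow> 0 | V i j \<Rightarrow>
    (if j = 0 then (if 1 \<le> i \<and> i \<le> n then (if y = V i 1 then b i
        else if (i < n \<and> y = V (Suc i) 0) \<or> (i = n \<and> y = S) then c i else 0) else 0)
     else (case y of S \<Rightarrow> g (V i (j - 1), S)
        | V i' j' \<Rightarrow> if j' = 0 then 0 else g (V i (j - 1), V i' (j' - 1)))))"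

lemma sh_edge: "1 \<le> n \<Longrightarrow> (sh x, sh y) \<in> gedges n (Suc m) \<longleftrightarrow> (x, y) \<in> gedges n m"
  by (cases x; cases y) (auto simp: sh_def mem_gedges)

lemma J1:
  assumes "1 \<le> n" "flowc n (Suc m) a f"
  shows "f = join n (\<lambda>i. rt f i 0) (\<lambda>i. dn n f i 0) (shift f)"
proof -
  have z: "\<And>e. e \<notin> gedges n (Suc m) \<Longrightarrow> f e = 0" using assms(2) unfolding flowc_def by auto
  show ?thesis
  proof (rule ext, clarify)
    fix x y
    show "f (x, y) = join n (\<lambda>i. rt f i 0) (\<lambda>i. dn n f i 0) (shift f) (x, y)"
    proof (cases x)
      case (V i j)
      show ?thesis
      proof (cases "j = 0")
        case True
        then show ?thesis using V z[of "(x,y)"] assms(1)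
          by (auto simp: join_def rt_def dn_def mem_gedges)
      next
        case False
        then show ?thesis using V z[of "(x,y)"] assms(1)
          by (cases y) (auto simp: join_def shift_def sh_def mem_gedges)
      qed
    next
      case S
      then show ?thesis using z[of "(x,y)"] assms(1) by (auto simp: join_def mem_gedges)
    qed
  qed
qed

lemma J2:
  assumes "\<forall>e. e \<notin> gedges n m \<longrightarrow> g e = 0"
  shows "shift (join n b c g) = g"
proof (rule ext, clarify)
  fix x y
  show "shift (join n b c g) (x, y) = g (x, y)"
  proof (cases x)
    case (V i j)
    then show ?thesis by (cases y) (simp_all add: join_def shift_def sh_def)
  next
    case S
    have "(S, y) \<notin> gedges n m" by (auto simp: gedges_def)
    then show ?thesis using assms[rule_format, of "(x,y)"] S by (simp add: join_def shift_def sh_def)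
  qed
qed

lemma Jcong:
  assumes "\<forall>i. 1 \<le> i \<longrightarrow> i \<le> n \<longrightarrow> b i = b' i \<and> c i = c' i"
  shows "join n b c g = join n b' c' g"
proof (rule ext, clarify)
  fix x y show "join n b c g (x, y) = join n b' c' g (x, y)"
    using assms by (cases x) (simp_all add: join_def)
qed

definition comb :: "real \<Rightarrow> ('a \<Rightarrow> real) \<Rightarrow> ('a \<Rightarrow> real) \<Rightarrow> ('a \<Rightarrow> real)" where
  "comb t y z = (\<lambda>e. (1 - t) * y e + t * z e)"

lemma Jcomb: "join n b c (comb t g1 g2) = comb t (join n b c g1) (join n b c g2)"
proof (rule ext, clarify)
  fix x y show "join n b c (comb t g1 g2) (x, y) = comb t (join n b c g1) (join n b c g2) (x, y)"
    by (cases x; cases y) (simp_all add: join_def comb_def algebra_simps)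
qed

lemma shift_comb: "shift (comb t f1 f2) = comb t (shift f1) (shift f2)"
  unfolding shift_def comb_def by (intro ext) auto


lemma col0_eq:
  assumes "flowc n (Suc m) a f" "1 \<le> i" "i \<le> n"
  shows "rt f i 0 + dn n f i 0 - (if 1 < i then dn n f (i - 1) 0 else 0) = real (a ! (i - 1))"
proof -
  have "outsum n (Suc m) f i 0 - insum n f i 0 = real (a ! (i - 1))"
    using assms unfolding flowc_def by auto
  then show ?thesis by (simp add: outsum_def insum_def)
qed

lemma telescope:
  assumes "flowc n (Suc m) a f"
  shows "k < n \<Longrightarrow> (\<Sum>i<Suc k. rt f (Suc i) 0) + dn n f (Suc k) 0 = (\<Sum>i<Suc k. real (a ! i))"
proof (induction k)
  case 0
  then show ?case using col0_eq[OF assms, of 1] by simp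
next
  case (Suc k)
  then show ?case using col0_eq[OF assms, of "Suc (Suc k)"] by simp
qed

lemma S1:
  assumes n: "1 \<le> n" and la: "length a = n" and lb: "length b = n" and f: "flowc n (Suc m) a f"
    and rb: "\<forall>i. 1 \<le> i \<longrightarrow> i \<le> n \<longrightarrow> rt f i 0 = real (b ! (i - 1))"
  shows "flowc n m b (shift f)"
proof -
  have z: "\<And>e. e \<notin> gedges n (Suc m) \<Longrightarrow> f e = 0" and nn: "\<And>e. 0 \<le> f e"
    and eqs: "\<And>i j. 1 \<le> i \<Longrightarrow> i \<le> n \<Longrightarrow> j \<le> Suc m \<Longrightarrow>
        outsum n (Suc m) f i j - insum n f i j = (if j = 0 then real (a ! (i - 1)) else 0)"
    and s: "(\<Sum>j\<le>Suc m. f (V n j, S)) = real (sum_list a)"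
    using f unfolding flowc_def by auto
  have z': "\<forall>e. e \<notin> gedges n m \<longrightarrow> shift f e = 0"
  proof (intro allI impI)
    fix e assume "e \<notin> gedges n m"
    moreover obtain x y where e: "e = (x, y)" by fastforce
    ultimately have "(sh x, sh y) \<notin> gedges n (Suc m)" using sh_edge[OF n] by auto
    then show "shift f e = 0" using z e by (simp add: shift_def)
  qed
  have nn': "\<forall>e. 0 \<le> shift f e" using nn by (simp add: shift_def split_beta)
  have eqs': "\<forall>i j. 1 \<le> i \<longrightarrow> i \<le> n \<longrightarrow> j \<le> m \<longrightarrow>
        outsum n m (shift f) i j - insum n (shift f) i j = (if j = 0 then real (b ! (i - 1)) else 0)"
  proof (intro allI impI)
    fix i j assume h: "1 \<le> i" "i \<le> n" "j \<le> m"
    have o: "outsum n m (shift f) i j = outsum n (Suc m) f i (Suc j)"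
      by (simp add: outsum_def rt_def dn_def shift_def sh_def)
    have ii: "insum n (shift f) i j + (if j = 0 then rt f i 0 else 0) = insum n f i (Suc j)"
      by (cases j) (simp_all add: insum_def rt_def dn_def shift_def sh_def)
    show "outsum n m (shift f) i j - insum n (shift f) i j = (if j = 0 then real (b ! (i - 1)) else 0)"
      using eqs[of i "Suc j"] h o ii rb by auto
  qed
  have tel: "(\<Sum>i<n. rt f (Suc i) 0) + dn n f n 0 = (\<Sum>i<n. real (a ! i))"
    using telescope[OF f, of "n - 1"] n by simp
  have "(\<Sum>i<n. rt f (Suc i) 0) = (\<Sum>i<n. real (b ! i))" using rb by simp
  also have "\<dots> = real (sum_list b)" using lb by (simp add: sum_list_nth)
  finally have sb: "(\<Sum>i<n. rt f (Suc i) 0) = real (sum_list b)" .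
  have sa: "(\<Sum>i<n. real (a ! i)) = real (sum_list a)" using la by (simp add: sum_list_nth)
  have "(\<Sum>j\<le>Suc m. f (V n j, S)) = f (V n 0, S) + (\<Sum>j\<le>m. f (V n (Suc j), S))"
    by (rule sum.atMost_Suc_shift)
  then have "(\<Sum>j\<le>m. shift f (V n j, S)) = real (sum_list b)"
    using s tel sb sa by (simp add: shift_def sh_def dn_def)
  then show ?thesis using z' nn' eqs' unfolding flowc_def by blast
qed

lemma bbcc_eq: "real (bb a w (Suc k)) + real (cc a w (Suc k)) - (if 1 < Suc k then real (cc a w k) else 0) = real (a ! k)"
  by (cases k) auto

lemma J3:
  assumes n: "1 \<le> n" and la: "length a = n" and w: "w \<in> Adm a" and g: "flowc n m (bvec a w) g"
  shows "flowc n (Suc m) a (join n (\<lambda>i. real (bb a w i)) (\<lambda>i. real (cc a w i)) g)"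
    (is "flowc n (Suc m) a ?J")
proof -
  have z: "\<And>e. e \<notin> gedges n m \<Longrightarrow> g e = 0" and nn: "\<And>e. 0 \<le> g e"
    and eqs: "\<And>i j. 1 \<le> i \<Longrightarrow> i \<le> n \<Longrightarrow> j \<le> m \<Longrightarrow>
        outsum n m g i j - insum n g i j = (if j = 0 then real (bvec a w ! (i - 1)) else 0)"
    and s: "(\<Sum>j\<le>m. g (V n j, S)) = real (sum_list (bvec a w))"
    using g unfolding flowc_def by auto
  have z': "\<forall>e. e \<notin> gedges n (Suc m) \<longrightarrow> ?J e = 0"
  proof (intro allI impI)
    fix e assume ne: "e \<notin> gedges n (Suc m)"
    obtain x y where e: "e = (x, y)" by fastforce
    show "?J e = 0"
    proof (cases x)
      case (V i j)
      show ?thesis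
      proof (cases "j = 0")
        case True
        then show ?thesis using ne e V n by (auto simp: join_def mem_gedges)
      next
        case False
        then have shx: "x = sh (V i (j - 1))" using V by (simp add: sh_def)
        show ?thesis
        proof (cases y)
          case (V i' j')
          show ?thesis
          proof (cases "j' = 0")
            case True then show ?thesis using V \<open>x = V i j\<close> False e by (simp add: join_def)
          next
            case False
            then have "y = sh (V i' (j' - 1))" using V by (simp add: sh_def)
            then have "(V i (j - 1), V i' (j' - 1)) \<notin> gedges n m" using ne e shx sh_edge[OF n] by metis
            then show ?thesis using z e V \<open>x = V i j\<close> False \<open>j \<noteq> 0\<close> by (simp add: join_def)
          qed
        next
          case S
          then have "y = sh S" by (simp add: sh_def)
          then have "(V i (j - 1), S) \<notin> gedges n m" using ne e shx sh_edge[OF n] by metis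
          then show ?thesis using z e S \<open>x = V i j\<close> False by (simp add: join_def)
        qed
      qed
    next
      case S
      then show ?thesis using e by (simp add: join_def)
    qed
  qed
  have nn': "\<forall>e. 0 \<le> ?J e"
  proof
    fix e :: "gv \<times> gv" obtain x y where e: "e = (x, y)" by fastforce
    show "0 \<le> ?J e" using nn unfolding e join_def by (auto split: gv.splits)
  qed
  have eqs': "\<forall>i j. 1 \<le> i \<longrightarrow> i \<le> n \<longrightarrow> j \<le> Suc m \<longrightarrow>
        outsum n (Suc m) ?J i j - insum n ?J i j = (if j = 0 then real (a ! (i - 1)) else 0)"
  proof (intro allI impI)
    fix i j assume h: "1 \<le> i" "i \<le> n" "j \<le> Suc m"
    show "outsum n (Suc m) ?J i j - insum n ?J i j = (if j = 0 then real (a ! (i - 1)) else 0)"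
    proof (cases j)
      case 0
      have o: "outsum n (Suc m) ?J i 0 = real (bb a w i) + real (cc a w i)"
        using h by (auto simp: outsum_def rt_def dn_def join_def)
      have ii: "insum n ?J i 0 = (if 1 < i then real (cc a w (i - 1)) else 0)"
        using h by (auto simp: insum_def rt_def dn_def join_def)
      obtain k where k: "i = Suc k" using h by (cases i) auto
      show ?thesis using o ii bbcc_eq[of a w k] 0 k by simp
    next
      case (Suc j')
      have o: "outsum n (Suc m) ?J i (Suc j') = outsum n m g i j'"
        by (simp add: outsum_def rt_def dn_def join_def)
      have ii: "insum n ?J i (Suc j') = insum n g i j' + (if j' = 0 then real (bb a w i) else 0)"
        using h by (cases j') (auto simp: insum_def rt_def dn_def join_def)
      have "bvec a w ! (i - 1) = bb a w i" using h la by (simp add: bvec_nth)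
      then have e2: "outsum n m g i j' - insum n g i j' = (if j' = 0 then real (bb a w i) else 0)"
        using eqs[of i j'] h Suc by simp
      show ?thesis using e2 o ii Suc by simp
    qed
  qed
  have "(\<Sum>j\<le>Suc m. ?J (V n j, S)) = ?J (V n 0, S) + (\<Sum>j\<le>m. ?J (V n (Suc j), S))"
    by (rule sum.atMost_Suc_shift)
  also have "\<dots> = real (cc a w n) + (\<Sum>j\<le>m. g (V n j, S))"
    using n by (simp add: join_def)
  also have "\<dots> = real (sum_list a)"
  proof -
    have b1: "sum_list (bvec a w) = (\<Sum>i<n. bb a w (Suc i))" using sum_list_bvec[of a w] la by simp
    have b2: "sum_list a = (\<Sum>i<n. a ! i)" using sum_list_nth[of a] la by simp
    have "cc a w n + sum_list (bvec a w) = sum_list a"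
      using cc_sum[of a w n] b1 b2 by simp
    then show ?thesis using s by (metis of_nat_add)
  qed
  finally have s': "(\<Sum>j\<le>Suc m. ?J (V n j, S)) = real (sum_list a)" .
  show ?thesis using z' nn' eqs' s' unfolding flowc_def by blast
qed


definition ind :: "gv \<times> gv \<Rightarrow> gv \<times> gv \<Rightarrow> real" where
  "ind e0 = (\<lambda>e. if e = e0 then 1 else 0)"

lemma outsum_add: "outsum n m (\<lambda>e. h1 e + h2 e) i j = outsum n m h1 i j + outsum n m h2 i j"
  by (simp add: outsum_def rt_def dn_def)
lemma insum_add: "insum n (\<lambda>e. h1 e + h2 e) i j = insum n h1 i j + insum n h2 i j"
  by (simp add: insum_def rt_def dn_def)
lemma outsum_diff: "outsum n m (\<lambda>e. h1 e - h2 e) i j = outsum n m h1 i j - outsum n m h2 i j"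
  by (simp add: outsum_def rt_def dn_def)
lemma insum_diff: "insum n (\<lambda>e. h1 e - h2 e) i j = insum n h1 i j - insum n h2 i j"
  by (simp add: insum_def rt_def dn_def)
lemma outsum_lin: "outsum n m (\<lambda>e. h1 e + s * h2 e) i j = outsum n m h1 i j + s * outsum n m h2 i j"
  by (simp add: outsum_def rt_def dn_def algebra_simps)
lemma insum_lin: "insum n (\<lambda>e. h1 e + s * h2 e) i j = insum n h1 i j + s * insum n h2 i j"
  by (simp add: insum_def rt_def dn_def algebra_simps)

lemma ind_rt:
  assumes "j < m"
  shows "outsum n m (ind (V i j, V i (Suc j))) i' j' - insum n (ind (V i j, V i (Suc j))) i' j'
     = (if i' = i \<and> j' = j then 1 else 0) - (if i' = i \<and> j' = Suc j then 1 else 0)"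
  using assms by (auto simp: outsum_def insum_def rt_def dn_def ind_def)

lemma ind_dn:
  assumes "1 \<le> i" "i < n"
  shows "outsum n m (ind (V i j, V (Suc i) j)) i' j' - insum n (ind (V i j, V (Suc i) j)) i' j'
     = (if i' = i \<and> j' = j then 1 else 0) - (if i' = Suc i \<and> j' = j then 1 else 0)"
  using assms by (auto simp: outsum_def insum_def rt_def dn_def ind_def)

lemma ind_S:
  assumes "i' \<le> n"
  shows "outsum n m (ind (V n j, S)) i' j' - insum n (ind (V n j, S)) i' j'
     = (if i' = n \<and> j' = j then 1 else 0)"
  using assms by (auto simp: outsum_def insum_def rt_def dn_def ind_def)

lemma indS_sum_V: "(\<Sum>j'\<le>m. ind (V i j, V i2 j2) (V n j', S)) = 0"
  by (simp add: ind_def)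

lemma indS_sum_S: "j \<le> m \<Longrightarrow> (\<Sum>j'\<le>m. ind (V n j, S) (V n j', S)) = 1"
  by (simp add: ind_def)

definition pathp :: "nat \<Rightarrow> nat \<Rightarrow> (gv \<times> gv \<Rightarrow> real) \<Rightarrow> nat \<Rightarrow> nat \<Rightarrow> (gv \<times> gv \<Rightarrow> real) \<Rightarrow> bool" where
  "pathp n m f i j h \<longleftrightarrow> (\<forall>e. h e \<noteq> 0 \<longrightarrow> 0 < f e) \<and>
     (\<forall>e. h e \<noteq> 0 \<longrightarrow> (\<exists>i' j'. fst e = V i' j' \<and> i + j \<le> i' + j')) \<and>
     (\<forall>i' j'. 1 \<le> i' \<longrightarrow> i' \<le> n \<longrightarrow> j' \<le> m \<longrightarrow>
        outsum n m h i' j' - insum n h i' j' = (if i' = i \<and> j' = j then 1 else 0)) \<and>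
     (\<Sum>j'\<le>m. h (V n j', S)) = 1"

lemma pathpD:
  assumes "pathp n m f i j h"
  shows "\<And>e. h e \<noteq> 0 \<Longrightarrow> 0 < f e"
    and "\<And>e. h e \<noteq> 0 \<Longrightarrow> \<exists>i' j'. fst e = V i' j' \<and> i + j \<le> i' + j'"
    and "\<And>i' j'. 1 \<le> i' \<Longrightarrow> i' \<le> n \<Longrightarrow> j' \<le> m \<Longrightarrow>
        outsum n m h i' j' - insum n h i' j' = (if i' = i \<and> j' = j then 1 else 0)"
    and "(\<Sum>j'\<le>m. h (V n j', S)) = 1"
  using assms unfolding pathp_def by blast+

lemma path_step:
  assumes h': "pathp n m f i2 j2 h'" and e0: "0 < f e0" and tl: "fst e0 = V i j"
    and ij: "i + j < i2 + j2"
    and cons: "\<And>i' j'. 1 \<le> i' \<Longrightarrow> i' \<le> n \<Longrightarrow> j' \<le> m \<Longrightarrow>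
       outsum n m (ind e0) i' j' - insum n (ind e0) i' j' =
       (if i' = i \<and> j' = j then 1 else 0) - (if i' = i2 \<and> j' = j2 then 1 else 0)"
    and s0: "(\<Sum>j'\<le>m. ind e0 (V n j', S)) = 0"
  shows "pathp n m f i j (\<lambda>e. h' e + ind e0 e)"
  unfolding pathp_def
proof (intro conjI allI impI)
  fix e assume "h' e + ind e0 e \<noteq> 0"
  then have "h' e \<noteq> 0 \<or> e = e0" unfolding ind_def by (auto split: if_splits)
  then show "0 < f e" using pathpD(1)[OF h'] e0 by blast
next
  fix e assume "h' e + ind e0 e \<noteq> 0"
  then have "h' e \<noteq> 0 \<or> e = e0" unfolding ind_def by (auto split: if_splits)
  then show "\<exists>i' j'. fst e = V i' j' \<and> i + j \<le> i' + j'"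
  proof
    assume "h' e \<noteq> 0"
    then obtain i' j' where "fst e = V i' j'" "i2 + j2 \<le> i' + j'" using pathpD(2)[OF h'] by blast
    then show ?thesis using ij by auto
  next
    assume "e = e0" then show ?thesis using tl by auto
  qed
next
  fix i' j' assume h: "1 \<le> i'" "i' \<le> n" "j' \<le> m"
  show "outsum n m (\<lambda>e. h' e + ind e0 e) i' j' - insum n (\<lambda>e. h' e + ind e0 e) i' j' = (if i' = i \<and> j' = j then 1 else 0)"
    unfolding outsum_add insum_add using pathpD(3)[OF h' h] cons[OF h] by simp
next
  show "(\<Sum>j'\<le>m. h' (V n j', S) + ind e0 (V n j', S)) = 1"
    using pathpD(4)[OF h'] s0 by (simp add: sum.distrib)
qed

lemma path_exists:
  assumes n: "1 \<le> n" and f: "flowc n m a f"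
  shows "1 \<le> i \<Longrightarrow> i \<le> n \<Longrightarrow> j \<le> m \<Longrightarrow> 0 < outsum n m f i j \<Longrightarrow> \<exists>h. pathp n m f i j h"
proof (induction "n + m - (i + j)" arbitrary: i j rule: less_induct)
  case less
  note hi = less.prems
  have nn: "\<And>e. 0 \<le> f e" using f unfolding flowc_def by auto
  have eqs: "\<And>i j. 1 \<le> i \<Longrightarrow> i \<le> n \<Longrightarrow> j \<le> m \<Longrightarrow>
        outsum n m f i j - insum n f i j = (if j = 0 then real (a ! (i - 1)) else 0)"
    using f unfolding flowc_def by auto
  have out_ge: "\<And>i j. 1 \<le> i \<Longrightarrow> i \<le> n \<Longrightarrow> j \<le> m \<Longrightarrow> insum n f i j \<le> outsum n m f i j"
  proof -
    fix i j assume "1 \<le> i" "i \<le> n" "j \<le> m"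
    from eqs[OF this] show "insum n f i j \<le> outsum n m f i j" by (cases "j = 0") auto
  qed
  have "(j < m \<and> 0 < rt f i j) \<or> 0 < dn n f i j"
  proof (rule ccontr)
    assume "\<not> ?thesis"
    then have "outsum n m f i j \<le> 0" using nn unfolding outsum_def rt_def dn_def
      by (auto simp: not_less)
    then show False using hi(4) by simp
  qed
  then consider (R) "j < m" "0 < rt f i j" | (D) "0 < dn n f i j" by blast
  then show ?case
  proof cases
    case R
    have "0 \<le> (if 1 < i then dn n f (i - 1) (Suc j) else 0)" using nn by (simp add: dn_def)
    then have "0 < insum n f i (Suc j)" using R by (simp add: insum_def)
    then have "0 < outsum n m f i (Suc j)" using out_ge[of i "Suc j"] hi R by simp
    moreover have "n + m - (i + Suc j) < n + m - (i + j)" using hi R by arith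
    ultimately obtain h' where h': "pathp n m f i (Suc j) h'"
      using less.hyps[of i "Suc j"] hi R by auto
    have "pathp n m f i j (\<lambda>e. h' e + ind (V i j, V i (Suc j)) e)"
      by (rule path_step[OF h']) (use R in \<open>auto simp: rt_def ind_rt indS_sum_V\<close>)
    then show ?thesis by blast
  next
    case D
    show ?thesis
    proof (cases "i < n")
      case True
      have "0 \<le> (if 0 < j then rt f (Suc i) (j - 1) else 0)" using nn by (simp add: rt_def)
      then have "0 < insum n f (Suc i) j" using D hi by (simp add: insum_def)
      then have "0 < outsum n m f (Suc i) j" using out_ge[of "Suc i" j] hi True by simp
      moreover have "n + m - (Suc i + j) < n + m - (i + j)" using hi True by arith
      ultimately obtain h' where h': "pathp n m f (Suc i) j h'"
        using less.hyps[of "Suc i" j] hi True by auto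
      have "pathp n m f i j (\<lambda>e. h' e + ind (V i j, V (Suc i) j) e)"
        by (rule path_step[OF h']) (use D True hi in \<open>auto simp: dn_def ind_dn indS_sum_V\<close>)
      then show ?thesis by blast
    next
      case False
      then have i: "i = n" using hi by simp
      have "pathp n m f i j (ind (V n j, S))"
        unfolding pathp_def
      proof (intro conjI allI impI)
        fix e assume "ind (V n j, S) e \<noteq> 0"
        then have "e = (V n j, S)" unfolding ind_def by (auto split: if_splits)
        then show "0 < f e" using D i by (simp add: dn_def)
      next
        fix e assume "ind (V n j, S) e \<noteq> 0"
        then have "e = (V n j, S)" unfolding ind_def by (auto split: if_splits)
        then show "\<exists>i' j'. fst e = V i' j' \<and> i + j \<le> i' + j'" using i by auto
      next
        fix i' j' assume "1 \<le> i'" "i' \<le> n" "j' \<le> m"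
        then show "outsum n m (ind (V n j, S)) i' j' - insum n (ind (V n j, S)) i' j' = (if i' = i \<and> j' = j then 1 else 0)"
          using ind_S[of i' n m j j'] i by simp
      next
        show "(\<Sum>j'\<le>m. ind (V n j, S) (V n j', S)) = 1" using indS_sum_S[OF hi(3)] .
      qed
      then show ?thesis by blast
    qed
  qed
qed


lemma finite_gedges: "finite (gedges n m)"
proof -
  let ?X = "insert S ((\<lambda>(i,j). V i j) ` ({..n} \<times> {..m}))"
  have "gedges n m \<subseteq> ?X \<times> ?X" unfolding gedges_def by auto
  moreover have "finite (?X \<times> ?X)" by auto
  ultimately show ?thesis by (rule finite_subset)
qed

lemma eps_exists:
  fixes f H :: "'a \<Rightarrow> real"
  assumes fin: "finite {e. H e \<noteq> 0}" and sup: "\<forall>e. H e \<noteq> 0 \<longrightarrow> 0 < f e" and nn: "\<forall>e. 0 \<le> f e"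
  shows "\<exists>\<epsilon>>0. \<forall>e. \<epsilon> * \<bar>H e\<bar> \<le> f e"
proof (cases "{e. H e \<noteq> 0} = {}")
  case True
  then show ?thesis using nn by (intro exI[of _ 1]) auto
next
  case False
  let ?T = "{e. H e \<noteq> 0}"
  define \<epsilon> where "\<epsilon> = Min ((\<lambda>e. f e / \<bar>H e\<bar>) ` ?T)"
  have pos: "0 < \<epsilon>" unfolding \<epsilon>_def using fin False sup
    by (subst Min_gr_iff) auto
  have "\<forall>e. \<epsilon> * \<bar>H e\<bar> \<le> f e"
  proof
    fix e show "\<epsilon> * \<bar>H e\<bar> \<le> f e"
    proof (cases "H e = 0")
      case True then show ?thesis using nn by simp
    next
      case False
      then have "\<epsilon> \<le> f e / \<bar>H e\<bar>" unfolding \<epsilon>_def using fin by (intro Min_le) auto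
      then show ?thesis using False by (simp add: pos_le_divide_eq)
    qed
  qed
  then show ?thesis using pos by blast
qed

lemma flowc_pert:
  assumes f: "flowc n m a f" and sup: "\<forall>e. H e \<noteq> 0 \<longrightarrow> 0 < f e"
    and nn: "\<forall>e. 0 \<le> f e + s * H e"
    and c: "\<forall>i j. 1 \<le> i \<longrightarrow> i \<le> n \<longrightarrow> j \<le> m \<longrightarrow> outsum n m H i j - insum n H i j = 0"
    and s0: "(\<Sum>j\<le>m. H (V n j, S)) = 0"
  shows "flowc n m a (\<lambda>e. f e + s * H e)"
proof -
  have z: "\<And>e. e \<notin> gedges n m \<Longrightarrow> f e = 0" and
    eqs: "\<And>i j. 1 \<le> i \<Longrightarrow> i \<le> n \<Longrightarrow> j \<le> m \<Longrightarrow>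
        outsum n m f i j - insum n f i j = (if j = 0 then real (a ! (i - 1)) else 0)"
    and s: "(\<Sum>j\<le>m. f (V n j, S)) = real (sum_list a)"
    using f unfolding flowc_def by auto
  have z': "\<forall>e. e \<notin> gedges n m \<longrightarrow> f e + s * H e = 0"
    using z sup by (metis add.right_neutral less_irrefl mult_zero_right)
  have e': "\<forall>i j. 1 \<le> i \<longrightarrow> i \<le> n \<longrightarrow> j \<le> m \<longrightarrow>
        outsum n m (\<lambda>e. f e + s * H e) i j - insum n (\<lambda>e. f e + s * H e) i j = (if j = 0 then real (a ! (i - 1)) else 0)"
  proof (intro allI impI)
    fix i j assume h: "1 \<le> i" "i \<le> n" "j \<le> m"
    have "outsum n m H i j - insum n H i j = 0" using c h by blast
    then show "outsum n m (\<lambda>e. f e + s * H e) i j - insum n (\<lambda>e. f e + s * H e) i j = (if j = 0 then real (a ! (i - 1)) else 0)"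
      unfolding outsum_lin insum_lin using eqs[OF h] by (simp add: algebra_simps)
  qed
  have s': "(\<Sum>j\<le>m. f (V n j, S) + s * H (V n j, S)) = real (sum_list a)"
    using s s0 by (simp add: sum.distrib sum_distrib_left[symmetric])
  show ?thesis unfolding flowc_def using z' nn e' s' by blast
qed

lemma ext_unfold:
  "f \<in> extreme_points P \<longleftrightarrow> f \<in> P \<and> \<not> (\<exists>y\<in>P. \<exists>z\<in>P. \<exists>t. y \<noteq> z \<and> 0 < t \<and> t < 1 \<and> f = comb t y z)"
  unfolding extreme_points_def comb_def by auto

lemma E1a:
  assumes n: "1 \<le> n" and fx: "f \<in> extreme_points (flow_polytope n (Suc m) a)"
    and i: "1 \<le> i" "i \<le> n"
  shows "rt f i 0 = 0 \<or> dn n f i 0 = 0"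
proof (rule ccontr)
  assume neg: "\<not> (rt f i 0 = 0 \<or> dn n f i 0 = 0)"
  have fP: "f \<in> flow_polytope n (Suc m) a" using fx unfolding ext_unfold by blast
  then have f: "flowc n (Suc m) a f" using fp_iff[OF n] by blast
  have z: "\<And>e. e \<notin> gedges n (Suc m) \<Longrightarrow> f e = 0" and nn: "\<And>e. 0 \<le> f e"
    and eqs: "\<And>i j. 1 \<le> i \<Longrightarrow> i \<le> n \<Longrightarrow> j \<le> Suc m \<Longrightarrow>
        outsum n (Suc m) f i j - insum n f i j = (if j = 0 then real (a ! (i - 1)) else 0)"
    using f unfolding flowc_def by auto
  have rp: "0 < rt f i 0" and dp: "0 < dn n f i 0"
    using neg nn by (auto simp: rt_def dn_def order_le_less split: if_splits)
  have "0 \<le> dn n f (i - Suc 0) (Suc 0)" using nn by (simp add: dn_def)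
  then have "0 < insum n f i 1" using rp by (simp add: insum_def add_pos_nonneg)
  moreover have "outsum n (Suc m) f i 1 - insum n f i 1 = 0" using eqs[of i 1] i by simp
  ultimately have "0 < outsum n (Suc m) f i 1" by simp
  then obtain h1 where h1: "pathp n (Suc m) f i 1 h1" using path_exists[OF n f i] by auto
  define e1 where "e1 = (V i 0, V i 1)"
  define H1 where "H1 = (\<lambda>e. h1 e + ind e1 e)"
  have H1: "pathp n (Suc m) f i 0 H1"
    unfolding H1_def e1_def
    by (rule path_step[OF h1]) (use rp i in \<open>auto simp: rt_def ind_rt[of 0 "Suc m"] indS_sum_V\<close>)
  have "\<exists>H2. pathp n (Suc m) f i 0 H2 \<and> H2 e1 = 0"
  proof (cases "i < n")
    case True
    have "0 \<le> (if 0 < (0::nat) then rt f (Suc i) 0 else 0)" by simp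
    then have "0 < insum n f (Suc i) 0" using dp i by (simp add: insum_def)
    moreover have "insum n f (Suc i) 0 \<le> outsum n (Suc m) f (Suc i) 0" using eqs[of "Suc i" 0] True by simp
    ultimately have "0 < outsum n (Suc m) f (Suc i) 0" by simp
    then obtain h2 where h2: "pathp n (Suc m) f (Suc i) 0 h2" using path_exists[OF n f, of "Suc i" 0] True by auto
    define H2 where "H2 = (\<lambda>e. h2 e + ind (V i 0, V (Suc i) 0) e)"
    have "pathp n (Suc m) f i 0 H2"
      unfolding H2_def
      by (rule path_step[OF h2]) (use dp i True in \<open>auto simp: dn_def ind_dn indS_sum_V\<close>)
    moreover have "h2 e1 = 0"
    proof (rule ccontr)
      assume "h2 e1 \<noteq> 0"
      then obtain i' j' where "fst e1 = V i' j'" "Suc i + 0 \<le> i' + j'" using pathpD(2)[OF h2] by blast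
      then show False unfolding e1_def by simp
    qed
    then have "H2 e1 = 0" unfolding H2_def e1_def ind_def by simp
    ultimately show ?thesis by blast
  next
    case False
    then have ii: "i = n" using i by simp
    define H2 where "H2 = ind (V n 0, S)"
    have "pathp n (Suc m) f i 0 H2"
      unfolding pathp_def
    proof (intro conjI allI impI)
      fix e assume "H2 e \<noteq> 0"
      then have "e = (V n 0, S)" unfolding H2_def ind_def by (auto split: if_splits)
      then show "0 < f e" using dp ii by (simp add: dn_def)
    next
      fix e assume "H2 e \<noteq> 0"
      then have "e = (V n 0, S)" unfolding H2_def ind_def by (auto split: if_splits)
      then show "\<exists>i' j'. fst e = V i' j' \<and> i + 0 \<le> i' + j'" using ii by auto
    next
      fix i' j' assume "1 \<le> i'" "i' \<le> n" "j' \<le> Suc m"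
      then show "outsum n (Suc m) H2 i' j' - insum n H2 i' j' = (if i' = i \<and> j' = 0 then 1 else 0)"
        using ind_S[of i' n "Suc m" 0 j'] ii unfolding H2_def by simp
    next
      show "(\<Sum>j'\<le>Suc m. H2 (V n j', S)) = 1" using indS_sum_S[of 0 "Suc m" n] unfolding H2_def by simp
    qed
    moreover have "H2 e1 = 0" unfolding H2_def e1_def ind_def by simp
    ultimately show ?thesis by blast
  qed
  then obtain H2 where H2: "pathp n (Suc m) f i 0 H2" and H2e: "H2 e1 = 0" by blast
  have h1e: "h1 e1 = 0"
  proof (rule ccontr)
    assume "h1 e1 \<noteq> 0"
    then obtain i' j' where "fst e1 = V i' j'" "i + 1 \<le> i' + j'" using pathpD(2)[OF h1] by blast
    then show False unfolding e1_def by simp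
  qed
  have H1e: "H1 e1 = 1" unfolding H1_def using h1e by (simp add: ind_def)
  define H where "H = (\<lambda>e. H1 e - H2 e)"
  have He: "H e1 = 1" unfolding H_def using H1e H2e by simp
  have sup: "\<forall>e. H e \<noteq> 0 \<longrightarrow> 0 < f e"
  proof (intro allI impI)
    fix e assume "H e \<noteq> 0"
    then have "H1 e \<noteq> 0 \<or> H2 e \<noteq> 0" unfolding H_def by auto
    then show "0 < f e" using pathpD(1)[OF H1, of e] pathpD(1)[OF H2, of e] by blast
  qed
  have fin: "finite {e. H e \<noteq> 0}"
  proof (rule finite_subset[OF _ finite_gedges[of n "Suc m"]])
    show "{e. H e \<noteq> 0} \<subseteq> gedges n (Suc m)"
    proof
      fix e assume "e \<in> {e. H e \<noteq> 0}"
      then have "0 < f e" using sup by blast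
      then show "e \<in> gedges n (Suc m)" using z[of e] by (cases "e \<in> gedges n (Suc m)") auto
    qed
  qed
  obtain \<epsilon> where ep: "0 < \<epsilon>" and epb: "\<forall>e. \<epsilon> * \<bar>H e\<bar> \<le> f e"
    using eps_exists[OF fin sup] nn by blast
  have c: "\<forall>i j. 1 \<le> i \<longrightarrow> i \<le> n \<longrightarrow> j \<le> Suc m \<longrightarrow> outsum n (Suc m) H i j - insum n H i j = 0"
  proof (intro allI impI)
    fix i' j' assume h: "1 \<le> i'" "i' \<le> n" "j' \<le> Suc m"
    show "outsum n (Suc m) H i' j' - insum n H i' j' = 0"
      unfolding H_def outsum_diff insum_diff using pathpD(3)[OF H1 h] pathpD(3)[OF H2 h] by simp
  qed
  have s0: "(\<Sum>j\<le>Suc m. H (V n j, S)) = 0"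
    unfolding H_def using pathpD(4)[OF H1] pathpD(4)[OF H2] by (simp add: sum_subtractf)
  have nn1: "\<forall>e. 0 \<le> f e + (-\<epsilon>) * H e"
  proof
    fix e have "\<epsilon> * H e \<le> \<epsilon> * \<bar>H e\<bar>" using ep by (simp add: mult_left_mono)
    then show "0 \<le> f e + (-\<epsilon>) * H e" using epb[rule_format, of e] by simp
  qed
  have nn2: "\<forall>e. 0 \<le> f e + \<epsilon> * H e"
  proof
    fix e have "\<epsilon> * (- H e) \<le> \<epsilon> * \<bar>H e\<bar>" using ep
      by (intro mult_left_mono) auto
    then have "- (\<epsilon> * H e) \<le> \<epsilon> * \<bar>H e\<bar>" by simp
    then show "0 \<le> f e + \<epsilon> * H e" using epb[rule_format, of e] by simp
  qed
  have f1: "(\<lambda>e. f e + (-\<epsilon>) * H e) \<in> flow_polytope n (Suc m) a"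
    using flowc_pert[OF f sup nn1 c s0] fp_iff[OF n] by blast
  have f2: "(\<lambda>e. f e + \<epsilon> * H e) \<in> flow_polytope n (Suc m) a"
    using flowc_pert[OF f sup nn2 c s0] fp_iff[OF n] by blast
  have ne: "(\<lambda>e. f e + (-\<epsilon>) * H e) \<noteq> (\<lambda>e. f e + \<epsilon> * H e)"
  proof
    assume "(\<lambda>e. f e + (-\<epsilon>) * H e) = (\<lambda>e. f e + \<epsilon> * H e)"
    then have "f e1 + (-\<epsilon>) * H e1 = f e1 + \<epsilon> * H e1" by metis
    then show False using He ep by simp
  qed
  have "f = comb (1/2) (\<lambda>e. f e + (-\<epsilon>) * H e) (\<lambda>e. f e + \<epsilon> * H e)"
    unfolding comb_def by (rule ext) (simp add: algebra_simps)
  moreover have "0 < (1/2::real)" "(1/2::real) < 1" by simp_all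
  ultimately show False using fx f1 f2 ne unfolding ext_unfold by blast
qed


lemma colvals:
  assumes f: "flowc n (Suc m) a f"
    and pat: "\<forall>i. 1 \<le> i \<longrightarrow> i \<le> n \<longrightarrow> (w ! (i - 1) = 1 \<longrightarrow> dn n f i 0 = 0) \<and> (w ! (i - 1) \<noteq> 1 \<longrightarrow> rt f i 0 = 0)"
  shows "\<forall>i. 1 \<le> i \<longrightarrow> i \<le> n \<longrightarrow> dn n f i 0 = real (cc a w i) \<and> rt f i 0 = real (bb a w i)"
  by (rule L_det[where B = "\<lambda>i. rt f i 0" and C = "\<lambda>i. dn n f i 0"]) (use col0_eq[OF f] pat in auto)

lemma rt_join0: "1 \<le> i \<Longrightarrow> i \<le> n \<Longrightarrow> rt (join n b c g) i 0 = b i"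
  by (simp add: rt_def join_def)

lemma dn_join0: "1 \<le> i \<Longrightarrow> i \<le> n \<Longrightarrow> dn n (join n b c g) i 0 = c i"
  by (auto simp: dn_def join_def)

lemma rt_comb: "rt (comb t f1 f2) i j = (1 - t) * rt f1 i j + t * rt f2 i j"
  by (simp add: rt_def comb_def)
lemma dn_comb: "dn n (comb t f1 f2) i j = (1 - t) * dn n f1 i j + t * dn n f2 i j"
  by (simp add: dn_def comb_def)

lemma comb_zero:
  fixes t x y :: real
  assumes "0 < t" "t < 1" "0 \<le> x" "0 \<le> y" "(1 - t) * x + t * y = 0"
  shows "x = 0 \<and> y = 0"
proof -
  have "0 \<le> (1 - t) * x" "0 \<le> t * y" using assms by simp_all
  then have "(1 - t) * x = 0" "t * y = 0" using assms(5) by linarith+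
  then show ?thesis using assms(1,2) by simp
qed

lemma flowc_zero: "flowc n m a f \<Longrightarrow> \<forall>e. e \<notin> gedges n m \<longrightarrow> f e = 0"
  unfolding flowc_def by blast
lemma flowc_nn: "flowc n m a f \<Longrightarrow> 0 \<le> f e"
  unfolding flowc_def by blast

definition wof :: "nat \<Rightarrow> (gv \<times> gv \<Rightarrow> real) \<Rightarrow> nat list" where
  "wof n f = map (\<lambda>k. if 0 < rt f (Suc k) 0 then 1 else 0) [0..<n]"

lemma E1:
  assumes n: "1 \<le> n" and la: "length a = n" and fx: "f \<in> extreme_points (flow_polytope n (Suc m) a)"
  shows "wof n f \<in> Adm a"
    and "\<forall>i. 1 \<le> i \<longrightarrow> i \<le> n \<longrightarrow> dn n f i 0 = real (cc a (wof n f) i) \<and> rt f i 0 = real (bb a (wof n f) i)"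
    and "shift f \<in> extreme_points (flow_polytope n m (bvec a (wof n f)))"
proof -
  let ?w = "wof n f"
  have fP: "f \<in> flow_polytope n (Suc m) a" using fx unfolding ext_unfold by blast
  then have f: "flowc n (Suc m) a f" using fp_iff[OF n] by blast
  have wi: "\<And>i. 1 \<le> i \<Longrightarrow> i \<le> n \<Longrightarrow> ?w ! (i - 1) = (if 0 < rt f i 0 then 1 else 0)"
    unfolding wof_def by simp
  have wpos: "\<And>i. 1 \<le> i \<Longrightarrow> i \<le> n \<Longrightarrow> ?w ! (i - 1) = 1 \<longleftrightarrow> 0 < rt f i 0"
  proof -
    fix i assume h: "1 \<le> i" "i \<le> n"
    show "?w ! (i - 1) = 1 \<longleftrightarrow> 0 < rt f i 0" using wi[OF h] by (cases "0 < rt f i 0") simp_all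
  qed
  have pat: "\<forall>i. 1 \<le> i \<longrightarrow> i \<le> n \<longrightarrow> (?w ! (i - 1) = 1 \<longrightarrow> dn n f i 0 = 0) \<and> (?w ! (i - 1) \<noteq> 1 \<longrightarrow> rt f i 0 = 0)"
  proof (intro allI impI)
    fix i assume h: "1 \<le> i" "i \<le> n"
    have e: "rt f i 0 = 0 \<or> dn n f i 0 = 0" by (rule E1a[OF n fx h])
    have nn: "0 \<le> rt f i 0" using flowc_nn[OF f, of "(V i 0, V i (Suc 0))"] by (simp add: rt_def)
    show "(?w ! (i - 1) = 1 \<longrightarrow> dn n f i 0 = 0) \<and> (?w ! (i - 1) \<noteq> 1 \<longrightarrow> rt f i 0 = 0)"
      using wpos[OF h] e nn by linarith
  qed
  note vals = colvals[OF f pat]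
  then show "\<forall>i. 1 \<le> i \<longrightarrow> i \<le> n \<longrightarrow> dn n f i 0 = real (cc a ?w i) \<and> rt f i 0 = real (bb a ?w i)" .
  show adm: "?w \<in> Adm a"
    unfolding Adm_def
  proof (intro CollectI conjI allI impI)
    show "length ?w = length a" using la by (simp add: wof_def)
    show "set ?w \<subseteq> {0, 1}" by (auto simp: wof_def)
    fix k assume k: "k < length a" "?w ! k = 1"
    then have "0 < rt f (Suc k) 0" using wpos[of "Suc k"] la by simp
    moreover have "rt f (Suc k) 0 = real (bb a ?w (Suc k))" using vals k la by simp
    ultimately show "0 < bb a ?w (Suc k)" by simp
  qed
  have rb: "\<forall>i. 1 \<le> i \<longrightarrow> i \<le> n \<longrightarrow> rt f i 0 = real (bvec a ?w ! (i - 1))"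
    using vals la by (auto simp: bvec_nth)
  have sP: "flowc n m (bvec a ?w) (shift f)" by (rule S1[OF n la _ f rb]) (simp add: la)
  let ?b = "\<lambda>i. real (bb a ?w i)" and ?c = "\<lambda>i. real (cc a ?w i)"
  have fj: "f = join n ?b ?c (shift f)"
  proof -
    have "f = join n (\<lambda>i. rt f i 0) (\<lambda>i. dn n f i 0) (shift f)" by (rule J1[OF n f])
    also have "\<dots> = join n ?b ?c (shift f)" by (rule Jcong) (use vals in auto)
    finally show ?thesis .
  qed
  show "shift f \<in> extreme_points (flow_polytope n m (bvec a ?w))"
    unfolding ext_unfold
  proof (intro conjI notI)
    show "shift f \<in> flow_polytope n m (bvec a ?w)" using sP fp_iff[OF n] by blast
  next
    assume "\<exists>y\<in>flow_polytope n m (bvec a ?w). \<exists>z\<in>flow_polytope n m (bvec a ?w). \<exists>t. y \<noteq> z \<and> 0 < t \<and> t < 1 \<and> shift f = comb t y z"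
    then obtain g1 g2 t where g1: "g1 \<in> flow_polytope n m (bvec a ?w)" and g2: "g2 \<in> flow_polytope n m (bvec a ?w)"
      and ne: "g1 \<noteq> g2" and t: "0 < t" "t < 1" and sc: "shift f = comb t g1 g2" by blast
    have c1: "flowc n m (bvec a ?w) g1" and c2: "flowc n m (bvec a ?w) g2" using g1 g2 fp_iff[OF n] by blast+
    have j1: "join n ?b ?c g1 \<in> flow_polytope n (Suc m) a" using J3[OF n la adm c1] fp_iff[OF n] by blast
    have j2: "join n ?b ?c g2 \<in> flow_polytope n (Suc m) a" using J3[OF n la adm c2] fp_iff[OF n] by blast
    have "join n ?b ?c g1 \<noteq> join n ?b ?c g2"
    proof
      assume "join n ?b ?c g1 = join n ?b ?c g2"
      then have "shift (join n ?b ?c g1) = shift (join n ?b ?c g2)" by simp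
      then show False using ne J2[OF flowc_zero[OF c1]] J2[OF flowc_zero[OF c2]] by simp
    qed
    moreover have "f = comb t (join n ?b ?c g1) (join n ?b ?c g2)"
    proof -
      have "join n ?b ?c (shift f) = join n ?b ?c (comb t g1 g2)" by (simp only: sc)
      with fj have "f = join n ?b ?c (comb t g1 g2)" by (rule trans)
      then show ?thesis by (simp only: Jcomb)
    qed
    ultimately show False using fx j1 j2 t unfolding ext_unfold by blast
  qed
qed

lemma E2:
  assumes n: "1 \<le> n" and la: "length a = n" and adm: "w \<in> Adm a"
    and gx: "g \<in> extreme_points (flow_polytope n m (bvec a w))"
  shows "join n (\<lambda>i. real (bb a w i)) (\<lambda>i. real (cc a w i)) g \<in> extreme_points (flow_polytope n (Suc m) a)"
proof -
  let ?b = "\<lambda>i. real (bb a w i)" and ?c = "\<lambda>i. real (cc a w i)"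
  let ?f = "join n ?b ?c g"
  have gP: "g \<in> flow_polytope n m (bvec a w)" using gx unfolding ext_unfold by blast
  then have g: "flowc n m (bvec a w) g" using fp_iff[OF n] by blast
  have f: "flowc n (Suc m) a ?f" by (rule J3[OF n la adm g])
  have lb: "length (bvec a w) = n" using la by simp
  show ?thesis unfolding ext_unfold
  proof (intro conjI notI)
    show "?f \<in> flow_polytope n (Suc m) a" using f fp_iff[OF n] by blast
  next
    assume "\<exists>y\<in>flow_polytope n (Suc m) a. \<exists>z\<in>flow_polytope n (Suc m) a. \<exists>t. y \<noteq> z \<and> 0 < t \<and> t < 1 \<and> ?f = comb t y z"
    then obtain f1 f2 t where f1: "f1 \<in> flow_polytope n (Suc m) a" and f2: "f2 \<in> flow_polytope n (Suc m) a"
      and ne: "f1 \<noteq> f2" and t: "0 < t" "t < 1" and fc: "?f = comb t f1 f2" by blast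
    have c1: "flowc n (Suc m) a f1" and c2: "flowc n (Suc m) a f2" using f1 f2 fp_iff[OF n] by blast+
    have pat: "\<forall>i. 1 \<le> i \<longrightarrow> i \<le> n \<longrightarrow>
        ((w ! (i - 1) = 1 \<longrightarrow> dn n f1 i 0 = 0) \<and> (w ! (i - 1) \<noteq> 1 \<longrightarrow> rt f1 i 0 = 0)) \<and>
        ((w ! (i - 1) = 1 \<longrightarrow> dn n f2 i 0 = 0) \<and> (w ! (i - 1) \<noteq> 1 \<longrightarrow> rt f2 i 0 = 0))"
    proof (intro allI impI)
      fix i assume h: "1 \<le> i" "i \<le> n"
      obtain k where k: "i = Suc k" using h by (cases i) auto
      have "dn n (comb t f1 f2) i 0 = ?c i" using dn_join0[OF h, of ?b ?c g] by (simp only: fc)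
      then have d: "(1 - t) * dn n f1 i 0 + t * dn n f2 i 0 = ?c i" by (simp only: dn_comb)
      have "rt (comb t f1 f2) i 0 = ?b i" using rt_join0[OF h, of ?b ?c g] by (simp only: fc)
      then have r: "(1 - t) * rt f1 i 0 + t * rt f2 i 0 = ?b i" by (simp only: rt_comb)
      have nd: "0 \<le> dn n f1 i 0" "0 \<le> dn n f2 i 0" "0 \<le> rt f1 i 0" "0 \<le> rt f2 i 0"
        using flowc_nn[OF c1] flowc_nn[OF c2] by (simp_all add: dn_def rt_def)
      show "((w ! (i - 1) = 1 \<longrightarrow> dn n f1 i 0 = 0) \<and> (w ! (i - 1) \<noteq> 1 \<longrightarrow> rt f1 i 0 = 0)) \<and>
        ((w ! (i - 1) = 1 \<longrightarrow> dn n f2 i 0 = 0) \<and> (w ! (i - 1) \<noteq> 1 \<longrightarrow> rt f2 i 0 = 0))"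
      proof (cases "w ! (i - 1) = 1")
        case True
        then have "?c i = 0" using k by simp
        then show ?thesis using comb_zero[OF t nd(1,2)] d True by simp
      next
        case False
        then have "?b i = 0" using k by simp
        then show ?thesis using comb_zero[OF t nd(3,4)] r False by simp
      qed
    qed
    have v1: "\<forall>i. 1 \<le> i \<longrightarrow> i \<le> n \<longrightarrow> dn n f1 i 0 = ?c i \<and> rt f1 i 0 = ?b i"
      by (rule colvals[OF c1]) (use pat in blast)
    have v2: "\<forall>i. 1 \<le> i \<longrightarrow> i \<le> n \<longrightarrow> dn n f2 i 0 = ?c i \<and> rt f2 i 0 = ?b i"
      by (rule colvals[OF c2]) (use pat in blast)
    have rb1: "\<forall>i. 1 \<le> i \<longrightarrow> i \<le> n \<longrightarrow> rt f1 i 0 = real (bvec a w ! (i - 1))"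
      using v1 la by (auto simp: bvec_nth)
    have rb2: "\<forall>i. 1 \<le> i \<longrightarrow> i \<le> n \<longrightarrow> rt f2 i 0 = real (bvec a w ! (i - 1))"
      using v2 la by (auto simp: bvec_nth)
    have s1: "flowc n m (bvec a w) (shift f1)" by (rule S1[OF n la lb c1 rb1])
    have s2: "flowc n m (bvec a w) (shift f2)" by (rule S1[OF n la lb c2 rb2])
    have "g = shift ?f" using J2[OF flowc_zero[OF g]] by simp
    also have "\<dots> = comb t (shift f1) (shift f2)" by (simp only: fc shift_comb)
    finally have gc: "g = comb t (shift f1) (shift f2)" .
    have sh: "shift f1 = shift f2"
    proof (rule ccontr)
      assume "shift f1 \<noteq> shift f2"
      moreover have "shift f1 \<in> flow_polytope n m (bvec a w)" "shift f2 \<in> flow_polytope n m (bvec a w)"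
        using s1 s2 fp_iff[OF n] by blast+
      ultimately show False using gx gc t unfolding ext_unfold by blast
    qed
    have "f1 = join n (\<lambda>i. rt f1 i 0) (\<lambda>i. dn n f1 i 0) (shift f1)" by (rule J1[OF n c1])
    also have "\<dots> = join n ?b ?c (shift f1)" by (rule Jcong) (use v1 in auto)
    also have "\<dots> = join n ?b ?c (shift f2)" by (simp only: sh)
    also have "\<dots> = join n (\<lambda>i. rt f2 i 0) (\<lambda>i. dn n f2 i 0) (shift f2)" by (rule Jcong) (use v2 in auto)
    also have "\<dots> = f2" by (rule J1[OF n c2, symmetric])
    finally have "f1 = f2" .
    then show False using ne by simp
  qed
qed



lemma adm_w: "w \<in> Adm a \<Longrightarrow> k < length a \<Longrightarrow> w ! k = (if 0 < bb a w (Suc k) then 1 else 0)"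
proof -
  assume w: "w \<in> Adm a" and k: "k < length a"
  have lw: "length w = length a" and sw: "set w \<subseteq> {0, 1}"
    and p: "\<forall>k<length a. w ! k = 1 \<longrightarrow> 0 < bb a w (Suc k)" using w unfolding Adm_def by auto
  have "w ! k \<in> set w" using k lw by simp
  then have w01: "w ! k \<in> {0, 1}" using sw by blast
  show ?thesis
  proof (cases "w ! k = 1")
    case True
    then show ?thesis using p k by simp
  next
    case False
    then have "w ! k = 0" using w01 by simp
    moreover have "bb a w (Suc k) = 0" using False by simp
    ultimately show ?thesis by simp
  qed
qed

lemma finite_Adm: "finite (Adm a)"
proof (rule finite_subset)
  show "Adm a \<subseteq> {w. set w \<subseteq> {0,1} \<and> length w = length a}" unfolding Adm_def by auto
  show "finite {w. set w \<subseteq> {0::nat,1} \<and> length w = length a}" by (rule finite_lists_length_eq) simp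
qed

definition Phi :: "nat \<Rightarrow> nat list \<Rightarrow> nat list \<times> (gv \<times> gv \<Rightarrow> real) \<Rightarrow> (gv \<times> gv \<Rightarrow> real)" where
  "Phi n a p = join n (\<lambda>i. real (bb a (fst p) i)) (\<lambda>i. real (cc a (fst p) i)) (snd p)"

lemma decomp_img:
  assumes n: "1 \<le> n" and la: "length a = n"
  shows "extreme_points (flow_polytope n (Suc m) a) =
     Phi n a ` (SIGMA w:Adm a. extreme_points (flow_polytope n m (bvec a w)))"
proof
  show "Phi n a ` (SIGMA w:Adm a. extreme_points (flow_polytope n m (bvec a w))) \<subseteq> extreme_points (flow_polytope n (Suc m) a)"
    using E2[OF n la] unfolding Phi_def by auto
next
  show "extreme_points (flow_polytope n (Suc m) a) \<subseteq> Phi n a ` (SIGMA w:Adm a. extreme_points (flow_polytope n m (bvec a w)))"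
  proof
    fix f assume fx: "f \<in> extreme_points (flow_polytope n (Suc m) a)"
    let ?w = "wof n f"
    have f: "flowc n (Suc m) a f" using fx fp_iff[OF n] unfolding ext_unfold by blast
    have "f = join n (\<lambda>i. rt f i 0) (\<lambda>i. dn n f i 0) (shift f)" by (rule J1[OF n f])
    also have "\<dots> = Phi n a (?w, shift f)" unfolding Phi_def
      by (simp only: fst_conv snd_conv) (rule Jcong, use E1(2)[OF n la fx] in auto)
    finally have "f = Phi n a (?w, shift f)" .
    moreover have "(?w, shift f) \<in> (SIGMA w:Adm a. extreme_points (flow_polytope n m (bvec a w)))"
      using E1(1,3)[OF n la fx] by blast
    ultimately show "f \<in> Phi n a ` (SIGMA w:Adm a. extreme_points (flow_polytope n m (bvec a w)))" by blast
  qed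
qed

lemma decomp_inj:
  assumes n: "1 \<le> n" and la: "length a = n"
  shows "inj_on (Phi n a) (SIGMA w:Adm a. extreme_points (flow_polytope n m (bvec a w)))"
proof (rule inj_onI)
  fix p q assume p: "p \<in> (SIGMA w:Adm a. extreme_points (flow_polytope n m (bvec a w)))"
    and q: "q \<in> (SIGMA w:Adm a. extreme_points (flow_polytope n m (bvec a w)))"
    and eq: "Phi n a p = Phi n a q"
  obtain w g where pw: "p = (w, g)" by fastforce
  obtain w' g' where qw: "q = (w', g')" by fastforce
  have w: "w \<in> Adm a" and gx: "g \<in> extreme_points (flow_polytope n m (bvec a w))" using p pw by auto
  have w': "w' \<in> Adm a" and gx': "g' \<in> extreme_points (flow_polytope n m (bvec a w'))" using q qw by auto
  have cg: "flowc n m (bvec a w) g" using gx fp_iff[OF n] unfolding ext_unfold by blast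
  have cg': "flowc n m (bvec a w') g'" using gx' fp_iff[OF n] unfolding ext_unfold by blast
  have e: "join n (\<lambda>i. real (bb a w i)) (\<lambda>i. real (cc a w i)) g = join n (\<lambda>i. real (bb a w' i)) (\<lambda>i. real (cc a w' i)) g'"
    using eq unfolding Phi_def pw qw by simp
  have "g = g'" using arg_cong[OF e, of shift] J2[OF flowc_zero[OF cg]] J2[OF flowc_zero[OF cg']] by simp
  moreover have "w = w'"
  proof (rule nth_equalityI)
    show "length w = length w'" using w w' unfolding Adm_def by simp
    fix k assume "k < length w"
    then have k: "k < length a" using w unfolding Adm_def by simp
    have "rt (join n (\<lambda>i. real (bb a w i)) (\<lambda>i. real (cc a w i)) g) (Suc k) 0 = real (bb a w (Suc k))"
      by (rule rt_join0) (use k la in auto)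
    moreover have "rt (join n (\<lambda>i. real (bb a w' i)) (\<lambda>i. real (cc a w' i)) g') (Suc k) 0 = real (bb a w' (Suc k))"
      by (rule rt_join0) (use k la in auto)
    ultimately have "bb a w (Suc k) = bb a w' (Suc k)" using e by (simp del: bb.simps)
    then show "w ! k = w' ! k" using adm_w[OF w k] adm_w[OF w' k] by (simp del: bb.simps)
  qed
  ultimately show "p = q" using pw qw by simp
qed

lemma card_decomp:
  assumes n: "1 \<le> n" and la: "length a = n"
    and fin: "\<forall>w\<in>Adm a. finite (extreme_points (flow_polytope n m (bvec a w)))"
  shows "finite (extreme_points (flow_polytope n (Suc m) a))"
    and "card (extreme_points (flow_polytope n (Suc m) a)) = (\<Sum>w\<in>Adm a. card (extreme_points (flow_polytope n m (bvec a w))))"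
proof -
  have fs: "finite (SIGMA w:Adm a. extreme_points (flow_polytope n m (bvec a w)))"
    using finite_Adm fin by (intro finite_SigmaI) auto
  show "finite (extreme_points (flow_polytope n (Suc m) a))"
    unfolding decomp_img[OF n la] using fs by simp
  have "card (extreme_points (flow_polytope n (Suc m) a)) = card (SIGMA w:Adm a. extreme_points (flow_polytope n m (bvec a w)))"
    unfolding decomp_img[OF n la] by (rule card_image[OF decomp_inj[OF n la]])
  also have "\<dots> = (\<Sum>w\<in>Adm a. card (extreme_points (flow_polytope n m (bvec a w))))"
    using finite_Adm fin by simp
  finally show "card (extreme_points (flow_polytope n (Suc m) a)) = (\<Sum>w\<in>Adm a. card (extreme_points (flow_polytope n m (bvec a w))))" .
qed

definition f0 :: "nat \<Rightarrow> nat list \<Rightarrow> (gv \<times> gv \<Rightarrow> real)" where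
  "f0 n b = (\<lambda>(x,y). case x of V i j \<Rightarrow>
     (if j = 0 \<and> 1 \<le> i \<and> i \<le> n \<and> ((i < n \<and> y = V (Suc i) 0) \<or> (i = n \<and> y = S))
      then real (sum_list (take i b)) else 0) | S \<Rightarrow> 0)"

lemma dn_f0: "1 \<le> i \<Longrightarrow> i \<le> n \<Longrightarrow> dn n (f0 n b) i 0 = real (sum_list (take i b))"
  by (auto simp: dn_def f0_def)

lemma take_diff: "k < length b \<Longrightarrow> real (sum_list (take (Suc k) b)) = real (sum_list (take k b)) + real (b ! k)"
  by (simp add: take_Suc_conv_app_nth)

lemma f0_flow:
  assumes n: "1 \<le> n" and lb: "length b = n"
  shows "flowc n 0 b (f0 n b)"
  unfolding flowc_def
proof (intro conjI allI impI)
  fix e assume "e \<notin> gedges n 0"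
  then show "f0 n b e = 0" using n by (cases e) (auto simp: f0_def mem_gedges split: gv.splits)
next
  fix e show "0 \<le> f0 n b e" by (cases e) (auto simp: f0_def split: gv.splits)
next
  fix i j :: nat assume h: "1 \<le> i" "i \<le> n" "j \<le> 0"
  obtain k where k: "i = Suc k" using h by (cases i) auto
  have "outsum n 0 (f0 n b) i 0 = real (sum_list (take i b))" using h by (simp add: outsum_def dn_f0)
  moreover have "insum n (f0 n b) i 0 = real (sum_list (take k b))"
  proof (cases k)
    case 0 then show ?thesis using k by (simp add: insum_def)
  next
    case (Suc k') then show ?thesis using k h by (simp add: insum_def dn_f0)
  qed
  ultimately show "outsum n 0 (f0 n b) i j - insum n (f0 n b) i j = (if j = 0 then real (b ! (i - 1)) else 0)"
    using h k take_diff[of k b] lb by simp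
next
  show "(\<Sum>j\<le>0. f0 n b (V n j, S)) = real (sum_list b)" using n lb by (simp add: f0_def)
qed

lemma f0_unique:
  assumes n: "1 \<le> n" and lb: "length b = n" and f: "flowc n 0 b f"
  shows "f = f0 n b"
proof -
  have eqs: "\<And>i. 1 \<le> i \<Longrightarrow> i \<le> n \<Longrightarrow> dn n f i 0 - (if 1 < i then dn n f (i - 1) 0 else 0) = real (b ! (i - 1))"
  proof -
    fix i assume "1 \<le> i" "i \<le> n"
    then have "outsum n 0 f i 0 - insum n f i 0 = real (b ! (i - 1))" using f unfolding flowc_def by auto
    then show "dn n f i 0 - (if 1 < i then dn n f (i - 1) 0 else 0) = real (b ! (i - 1))"
      by (simp add: outsum_def insum_def)
  qed
  have vals: "\<And>k. k < n \<Longrightarrow> dn n f (Suc k) 0 = real (sum_list (take (Suc k) b))"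
  proof -
    fix k show "k < n \<Longrightarrow> dn n f (Suc k) 0 = real (sum_list (take (Suc k) b))"
    proof (induction k)
      case 0 then show ?case using eqs[of 1] lb by (simp add: take_Suc_conv_app_nth)
    next
      case (Suc k)
      then show ?case using eqs[of "Suc (Suc k)"] take_diff[of "Suc k" b] lb by simp
    qed
  qed
  have z: "\<And>e. e \<notin> gedges n 0 \<Longrightarrow> f e = 0" using f unfolding flowc_def by auto
  show ?thesis
  proof (rule ext, clarify)
    fix x y
    show "f (x, y) = f0 n b (x, y)"
    proof (cases "(x, y) \<in> gedges n 0")
      case True
      then obtain i where i: "x = V i 0" "1 \<le> i" "i \<le> n" "(i < n \<and> y = V (Suc i) 0) \<or> (i = n \<and> y = S)"
        using n by (auto simp: mem_gedges)
      obtain k where k: "i = Suc k" "k < n" using i by (cases i) auto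
      have "dn n f i 0 = f (x, y)" using i by (auto simp: dn_def)
      moreover have "dn n (f0 n b) i 0 = f0 n b (x, y)" using i by (auto simp: dn_def)
      ultimately show ?thesis using vals[of k] k dn_f0[of i n b] i by simp
    next
      case False
      then show ?thesis using z[of "(x,y)"] n by (auto simp: f0_def mem_gedges split: gv.splits)
    qed
  qed
qed

lemma ext_m0:
  assumes n: "1 \<le> n" and lb: "length b = n"
  shows "extreme_points (flow_polytope n 0 b) = {f0 n b}"
proof -
  have "flow_polytope n 0 b = {f0 n b}"
    using f0_flow[OF n lb] f0_unique[OF n lb] fp_iff[OF n] by blast
  then show ?thesis unfolding extreme_points_def by auto
qed


definition good :: "nat list \<Rightarrow> nat set \<Rightarrow> bool" where
  "good L A \<longleftrightarrow> (\<exists>M. greedy_match L A = Some M \<and> (\<forall>p\<in>set M. fst p - snd p \<le> 1))"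

lemma good_Nil: "good [] A"
  unfolding good_def by simp

lemma good_Cons:
  "good (x # L) A \<longleftrightarrow> ({j \<in> A. j \<le> x} \<noteq> {} \<and> x - Max {j \<in> A. j \<le> x} \<le> 1 \<and> good L (A - {Max {j \<in> A. j \<le> x}}))"
  unfolding good_def by (auto simp: Let_def)

lemma greedy_insert_big:
  "(\<forall>x\<in>set L. x < y) \<Longrightarrow> greedy_match L (insert y A) = greedy_match L A"
proof (induction L arbitrary: A)
  case Nil
  then show ?case by simp
next
  case (Cons x L)
  let ?C = "{j \<in> A. j \<le> x}"
  have C: "{j \<in> insert y A. j \<le> x} = ?C" using Cons.prems by auto
  have e1: "greedy_match (x # L) (insert y A) = (if ?C = {} then None else
      map_option (Cons (x, Max ?C)) (greedy_match L (insert y A - {Max ?C})))"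
    by (simp only: greedy_match.simps Let_def C)
  have e2: "greedy_match (x # L) A = (if ?C = {} then None else
      map_option (Cons (x, Max ?C)) (greedy_match L (A - {Max ?C})))"
    by (simp only: greedy_match.simps Let_def)
  show ?case
  proof (cases "?C = {}")
    case True
    then show ?thesis unfolding e1 e2 by simp
  next
    case False
    have "Max ?C \<le> x" using False by (intro Max.boundedI) auto
    then have "insert y A - {Max ?C} = insert y (A - {Max ?C})" using Cons.prems by auto
    then show ?thesis unfolding e1 e2 using Cons.IH Cons.prems False by auto
  qed
qed

lemma zeros_snoc: "zeros (v @ [x]) = (if x = 0 then insert (Suc (length v)) (zeros v) else zeros v)"
  unfolding zeros_def by (auto simp: nth_append less_Suc_eq_le le_Suc_eq)

lemma zeros_sub: "zeros v \<subseteq> {1..length v}"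
  unfolding zeros_def by auto

lemma finite_zeros: "finite (zeros v)"
  using finite_subset[OF zeros_sub] by blast

lemma zeros_Nil: "zeros [] = {}"
  unfolding zeros_def by auto

lemma rsl_insert:
  assumes "finite Z" "\<forall>z\<in>Z. z \<le> k"
  shows "rev (sorted_list_of_set (insert (Suc k) Z)) = Suc k # rev (sorted_list_of_set Z)"
proof -
  have "Suc k \<notin> Z" using assms by auto
  then have "sorted_list_of_set (insert (Suc k) Z) = insort (Suc k) (sorted_list_of_set Z)"
    using assms(1) by (rule sorted_list_of_set_insert[rotated])
  also have "\<dots> = sorted_list_of_set Z @ [Suc k]"
    by (rule sorted_insort_is_snoc) (use assms in auto)
  finally show ?thesis by simp
qed

definition Gm :: "nat list \<Rightarrow> nat list \<Rightarrow> bool" where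
  "Gm v w = good (rev (sorted_list_of_set (zeros v))) (zeros w)"

lemma set_rsl_zeros: "x \<in> set (rev (sorted_list_of_set (zeros v))) \<Longrightarrow> x \<le> length v"
  using zeros_sub finite_zeros by fastforce

lemma G_R1:
  assumes "length w = length v" "x \<noteq> 0"
  shows "Gm (v @ [x]) (w @ [y]) = Gm v w"
proof -
  have "\<forall>z\<in>set (rev (sorted_list_of_set (zeros v))). z < Suc (length w)"
    using set_rsl_zeros assms(1) by fastforce
  then show ?thesis using assms unfolding Gm_def good_def
    by (simp add: zeros_snoc greedy_insert_big)
qed

lemma G_R2:
  assumes "length w = length v"
  shows "Gm (v @ [0]) (w @ [0]) = Gm v w"
proof -
  let ?k = "length v"
  have z0: "zeros (v @ [0]) = insert (Suc ?k) (zeros v)" by (simp add: zeros_snoc)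
  have L: "rev (sorted_list_of_set (zeros (v @ [0]))) = Suc ?k # rev (sorted_list_of_set (zeros v))"
    unfolding z0 by (rule rsl_insert[OF finite_zeros]) (use zeros_sub[of v] in auto)
  have A: "zeros (w @ [0]) = insert (Suc ?k) (zeros w)" using assms by (simp add: zeros_snoc)
  have nz: "Suc ?k \<notin> zeros w" using zeros_sub[of w] assms by auto
  have C: "{j \<in> insert (Suc ?k) (zeros w). j \<le> Suc ?k} = insert (Suc ?k) (zeros w)"
    using zeros_sub[of w] assms by auto
  have M: "Max (insert (Suc ?k) (zeros w)) = Suc ?k"
    using zeros_sub[of w] assms finite_zeros by (intro Max_eqI) auto
  show ?thesis unfolding Gm_def L A good_Cons C M using nz by simp
qed

lemma G_R3:
  assumes "length w = length v" "y \<noteq> 0"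
  shows "Gm (v @ [0]) (w @ [y]) \<longleftrightarrow> length v \<in> zeros w \<and> good (rev (sorted_list_of_set (zeros v))) (zeros w - {length v})"
proof -
  let ?k = "length v"
  let ?L = "rev (sorted_list_of_set (zeros v))"
  have z0: "zeros (v @ [0]) = insert (Suc ?k) (zeros v)" by (simp add: zeros_snoc)
  have L: "rev (sorted_list_of_set (zeros (v @ [0]))) = Suc ?k # ?L"
    unfolding z0 by (rule rsl_insert[OF finite_zeros]) (use zeros_sub[of v] in auto)
  have A: "zeros (w @ [y]) = zeros w" using assms by (simp add: zeros_snoc)
  have C: "{j \<in> zeros w. j \<le> Suc ?k} = zeros w" using zeros_sub[of w] assms by auto
  have G: "Gm (v @ [0]) (w @ [y]) \<longleftrightarrow> (zeros w \<noteq> {} \<and> Suc ?k - Max (zeros w) \<le> 1 \<and> good ?L (zeros w - {Max (zeros w)}))"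
    unfolding Gm_def L A good_Cons C ..
  show ?thesis
  proof (cases "?k \<in> zeros w")
    case True
    have "Max (zeros w) = ?k"
      using zeros_sub[of w] assms finite_zeros True by (intro Max_eqI) auto
    then show ?thesis using G True by auto
  next
    case False
    have "\<not> (zeros w \<noteq> {} \<and> Suc ?k - Max (zeros w) \<le> 1)"
    proof
      assume h: "zeros w \<noteq> {} \<and> Suc ?k - Max (zeros w) \<le> 1"
      have mi: "Max (zeros w) \<in> zeros w" using h finite_zeros by (intro Max_in) auto
      then have "Max (zeros w) \<le> ?k" using zeros_sub[of w] assms by auto
      then have "Max (zeros w) = ?k" using h by arith
      then show False using mi False by simp
    qed
    then show ?thesis using G False by blast
  qed
qed

lemma cc_snoc: "length w = length v \<Longrightarrow> i \<le> length v \<Longrightarrow> cc (v @ [x]) (w @ [y]) i = cc v w i"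
  by (induction i) (auto simp: nth_append)

lemma cc_snoc_last: "length w = length v \<Longrightarrow> cc (v @ [x]) (w @ [y]) (Suc (length v)) = (if y = 1 then 0 else cc v w (length v) + x)"
  using cc_snoc[of w v "length v" x y] by (simp add: nth_append)

lemma bb_snoc: "length w = length v \<Longrightarrow> k < length v \<Longrightarrow> bb (v @ [x]) (w @ [y]) (Suc k) = bb v w (Suc k)"
  using cc_snoc[of w v k x y] by (simp add: nth_append)

lemma Adm_snoc:
  assumes "length w = length v"
  shows "(w @ [y] \<in> Adm (v @ [x])) \<longleftrightarrow> (w \<in> Adm v \<and> y \<in> {0, 1} \<and> (y = 1 \<longrightarrow> 0 < cc v w (length v) + x))"
proof -
  have "(\<forall>k<length (v @ [x]). (w @ [y]) ! k = 1 \<longrightarrow> 0 < bb (v @ [x]) (w @ [y]) (Suc k)) \<longleftrightarrow>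
        (\<forall>k<length v. w ! k = 1 \<longrightarrow> 0 < bb v w (Suc k)) \<and> (y = 1 \<longrightarrow> 0 < cc v w (length v) + x)"
  proof
    assume h: "\<forall>k<length (v @ [x]). (w @ [y]) ! k = 1 \<longrightarrow> 0 < bb (v @ [x]) (w @ [y]) (Suc k)"
    show "(\<forall>k<length v. w ! k = 1 \<longrightarrow> 0 < bb v w (Suc k)) \<and> (y = 1 \<longrightarrow> 0 < cc v w (length v) + x)"
    proof (intro conjI allI impI)
      fix k assume k: "k < length v" "w ! k = 1"
      then show "0 < bb v w (Suc k)" using h[rule_format, of k] bb_snoc[OF assms k(1)] assms
        by (simp add: nth_append del: bb.simps)
    next
      assume "y = 1"
      then show "0 < cc v w (length v) + x" using h[rule_format, of "length v"] assms cc_snoc[OF assms le_refl]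
        by (simp add: nth_append)
    qed
  next
    assume h: "(\<forall>k<length v. w ! k = 1 \<longrightarrow> 0 < bb v w (Suc k)) \<and> (y = 1 \<longrightarrow> 0 < cc v w (length v) + x)"
    show "\<forall>k<length (v @ [x]). (w @ [y]) ! k = 1 \<longrightarrow> 0 < bb (v @ [x]) (w @ [y]) (Suc k)"
    proof (intro allI impI)
      fix k assume k: "k < length (v @ [x])" "(w @ [y]) ! k = 1"
      show "0 < bb (v @ [x]) (w @ [y]) (Suc k)"
      proof (cases "k < length v")
        case True
        then show ?thesis using h k bb_snoc[OF assms True, of x y] assms by (simp add: nth_append del: bb.simps)
      next
        case False
        then have "k = length v" using k by simp
        then show ?thesis using h k assms cc_snoc[OF assms le_refl] by (simp add: nth_append)
      qed
    qed
  qed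
  then show ?thesis unfolding Adm_def using assms by auto
qed

lemma Adm_Nil: "w \<in> Adm [] \<longleftrightarrow> w = []"
  unfolding Adm_def by auto

lemma G_Adm:
  "\<forall>w::nat list. length w = length v \<longrightarrow> set w \<subseteq> {0, 1} \<longrightarrow> (Gm v w \<longleftrightarrow> w \<in> Adm v)"
proof (induction v rule: rev_induct)
  case Nil
  show ?case
  proof (intro allI impI)
    fix w :: "nat list" assume "length w = length []"
    then have "w = []" by simp
    then show "Gm [] w \<longleftrightarrow> w \<in> Adm []" by (simp add: Gm_def zeros_Nil good_Nil Adm_Nil)
  qed
next
  case (snoc x v)
  show ?case
  proof (intro allI impI)
    fix w0 :: "nat list" assume lw: "length w0 = length (v @ [x])" and sw: "set w0 \<subseteq> {0, 1}"
    obtain w y where w0: "w0 = w @ [y]" using lw by (cases w0 rule: rev_cases) auto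
    have lwv: "length w = length v" using lw w0 by simp
    have sw': "set w \<subseteq> {0, 1}" and y01: "y \<in> {0, 1}" using sw w0 by auto
    have IH: "Gm v w \<longleftrightarrow> w \<in> Adm v" using snoc.IH lwv sw' by blast
    have "Gm (v @ [x]) (w @ [y]) \<longleftrightarrow> w @ [y] \<in> Adm (v @ [x])"
    proof (cases "x = 0")
      case False
      have g: "Gm (v @ [x]) (w @ [y]) = Gm v w" by (rule G_R1[OF lwv False])
      have "w @ [y] \<in> Adm (v @ [x]) \<longleftrightarrow> w \<in> Adm v" using Adm_snoc[OF lwv, of y x] y01 False by simp
      then show ?thesis using g IH by simp
    next
      case x0: True
      show ?thesis
      proof (cases "y = 0")
        case True
        have g: "Gm (v @ [0]) (w @ [0]) = Gm v w" by (rule G_R2[OF lwv])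
        have "w @ [0] \<in> Adm (v @ [0]) \<longleftrightarrow> w \<in> Adm v" using Adm_snoc[OF lwv, of 0 0] by simp
        then show ?thesis using g IH x0 True by simp
      next
        case False
        then have y1: "y = 1" using y01 by auto
        have g3: "Gm (v @ [0]) (w @ [y]) \<longleftrightarrow> length v \<in> zeros w \<and> good (rev (sorted_list_of_set (zeros v))) (zeros w - {length v})"
          by (rule G_R3[OF lwv False])
        have a3: "w @ [y] \<in> Adm (v @ [0]) \<longleftrightarrow> w \<in> Adm v \<and> 0 < cc v w (length v)"
          using Adm_snoc[OF lwv, of y 0] y1 by simp
        show ?thesis
        proof (cases w rule: rev_cases)
          case Nil
          then have "v = []" using lwv by simp
          then have "\<not> 0 < cc v w (length v)" by simp
          moreover have "length v \<notin> zeros w" using Nil by (simp add: zeros_Nil)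
          ultimately show ?thesis using g3 a3 x0 by simp
        next
          case (snoc w1 y1')
          obtain v1 x1 where v: "v = v1 @ [x1]" using lwv snoc by (cases v rule: rev_cases) auto
          have l1: "length w1 = length v1" using lwv snoc v by simp
          have y1'01: "y1' \<in> {0,1}" using sw' snoc by auto
          have lv: "length v = Suc (length w1)" using v l1 by simp
          have nz: "Suc (length w1) \<notin> zeros w1" using zeros_sub[of w1] by auto
          have zk: "length v \<in> zeros w \<longleftrightarrow> y1' = 0"
            using nz unfolding lv snoc zeros_snoc by simp
          have zr: "y1' = 0 \<Longrightarrow> zeros w - {length v} = zeros (w1 @ [1])"
            using nz unfolding lv snoc zeros_snoc by simp
          have s1: "set (w1 @ [1]) \<subseteq> {0, 1}" using sw' snoc by auto
          have IH2: "Gm v (w1 @ [1]) \<longleftrightarrow> w1 @ [1] \<in> Adm v"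
            using snoc.IH s1 lwv snoc by simp
          have lhs: "Gm (v @ [0]) (w @ [y]) \<longleftrightarrow> y1' = 0 \<and> Gm v (w1 @ [1])"
          proof
            assume "Gm (v @ [0]) (w @ [y])"
            then have h: "length v \<in> zeros w" "good (rev (sorted_list_of_set (zeros v))) (zeros w - {length v})"
              using g3 by auto
            then have "y1' = 0" using zk by simp
            then show "y1' = 0 \<and> Gm v (w1 @ [1])" using h(2) zr unfolding Gm_def by simp
          next
            assume h: "y1' = 0 \<and> Gm v (w1 @ [1])"
            then show "Gm (v @ [0]) (w @ [y])" using g3 zk zr unfolding Gm_def by simp
          qed
          have a1: "w1 @ [1] \<in> Adm (v1 @ [x1]) \<longleftrightarrow> w1 \<in> Adm v1 \<and> 0 < cc v1 w1 (length v1) + x1"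
            using Adm_snoc[OF l1, of 1 x1] by simp
          have cl: "cc (v1 @ [x1]) (w1 @ [y1']) (Suc (length v1)) = (if y1' = 1 then 0 else cc v1 w1 (length v1) + x1)"
            by (rule cc_snoc_last[OF l1])
          have cl2: "cc v w (length v) = (if y1' = 1 then 0 else cc v1 w1 (length v1) + x1)"
            using cl v snoc by simp
          have aw: "w \<in> Adm v \<longleftrightarrow> w1 \<in> Adm v1 \<and> y1' \<in> {0,1} \<and> (y1' = 1 \<longrightarrow> 0 < cc v1 w1 (length v1) + x1)"
            using Adm_snoc[OF l1, of y1' x1] v snoc by simp
          have rhs: "w @ [y] \<in> Adm (v @ [0]) \<longleftrightarrow> y1' = 0 \<and> w1 \<in> Adm v1 \<and> 0 < cc v1 w1 (length v1) + x1"
            using a3 aw cl2 y1'01 by auto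
          show ?thesis using lhs rhs a1 IH2 v x0 by simp
        qed
      qed
    qed
    then show "Gm (v @ [x]) w0 \<longleftrightarrow> w0 \<in> Adm (v @ [x])" using w0 by simp
  qed
qed


lemma dom_snoc:
  assumes "length w = length v"
  shows "dominates (v @ [x]) (w @ [y]) \<longleftrightarrow> dominates v w \<and> sum_list w + y \<le> sum_list v + x"
proof -
  have t: "\<And>i. i \<le> length v \<Longrightarrow> take i (v @ [x]) = take i v \<and> take i (w @ [y]) = take i w"
    using assms by simp
  show ?thesis
  proof
    assume h: "dominates (v @ [x]) (w @ [y])"
    have "dominates v w" unfolding dominates_def
    proof (intro allI impI)
      fix i assume iv: "i \<le> length v"
      have "sum_list (take i (w @ [y])) \<le> sum_list (take i (v @ [x]))"
        using h iv unfolding dominates_def by (simp del: take_append)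
      then show "sum_list (take i w) \<le> sum_list (take i v)"
        by (simp only: t[OF iv])
    qed
    moreover have "sum_list w + y \<le> sum_list v + x"
      using h assms unfolding dominates_def by (auto dest: spec[of _ "Suc (length v)"])
    ultimately show "dominates v w \<and> sum_list w + y \<le> sum_list v + x" by blast
  next
    assume h: "dominates v w \<and> sum_list w + y \<le> sum_list v + x"
    show "dominates (v @ [x]) (w @ [y])" unfolding dominates_def
    proof (intro allI impI)
      fix i assume i: "i \<le> length (v @ [x])"
      show "sum_list (take i (w @ [y])) \<le> sum_list (take i (v @ [x]))"
      proof (cases "i \<le> length v")
        case True
        then have "sum_list (take i w) \<le> sum_list (take i v)" using h unfolding dominates_def by simp
        then show ?thesis by (simp only: t[OF True])
      next
        case False
        then have "i = Suc (length v)" using i by simp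
        then show ?thesis using h assms by simp
      qed
    qed
  qed
qed

lemma Adm_dom:
  "\<forall>w. w \<in> Adm v \<longrightarrow> dominates v w \<and> sum_list w + (if 0 < cc v w (length v) then 1 else 0) \<le> sum_list v"
proof (induction v rule: rev_induct)
  case Nil
  then show ?case by (auto simp: Adm_Nil dominates_def)
next
  case (snoc x v)
  show ?case
  proof (intro allI impI)
    fix w0 assume w0A: "w0 \<in> Adm (v @ [x])"
    then have "length w0 = Suc (length v)" unfolding Adm_def by simp
    then obtain w y where w0: "w0 = w @ [y]" by (cases w0 rule: rev_cases) auto
    have lwv: "length w = length v" using w0A w0 unfolding Adm_def by simp
    have a: "w \<in> Adm v" "y \<in> {0, 1}" "y = 1 \<longrightarrow> 0 < cc v w (length v) + x"
      using w0A Adm_snoc[OF lwv, of y x] w0 by auto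
    have IH: "dominates v w" "sum_list w + (if 0 < cc v w (length v) then 1 else 0) \<le> sum_list v"
      using snoc.IH a(1) by auto
    have cl: "cc (v @ [x]) (w @ [y]) (length (v @ [x])) = (if y = 1 then 0 else cc v w (length v) + x)"
      using cc_snoc_last[OF lwv] by simp
    show "dominates (v @ [x]) w0 \<and> sum_list w0 + (if 0 < cc (v @ [x]) w0 (length (v @ [x])) then 1 else 0) \<le> sum_list (v @ [x])"
    proof (cases "y = 1")
      case True
      have "sum_list w + 1 \<le> sum_list v + x"
        using IH(2) a(3) True by (cases "0 < cc v w (length v)") auto
      then show ?thesis unfolding w0 cl using dom_snoc[OF lwv] IH(1) True by simp
    next
      case False
      then have y0: "y = 0" using a(2) by auto
      have "sum_list w + (if 0 < cc v w (length v) + x then 1 else 0) \<le> sum_list v + x"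
        using IH(2) by (cases "0 < cc v w (length v)") auto
      moreover have "sum_list w \<le> sum_list v" using IH(2) by simp
      ultimately show ?thesis unfolding w0 cl using dom_snoc[OF lwv] IH(1) y0 by simp
    qed
  qed
qed

lemma chi01: "set v \<subseteq> {0, 1} \<Longrightarrow> chi v = v"
  unfolding chi_def by (rule map_idI) auto

lemma chi_set: "set (chi a) \<subseteq> {0, 1}"
  unfolding chi_def by auto

lemma length_chi[simp]: "length (chi a) = length a"
  unfolding chi_def by simp

lemma max1: "(1 = Max ({i - j |i j. (i, j) \<in> set M} \<union> {1})) \<longleftrightarrow> (\<forall>p\<in>set M. fst p - snd p \<le> (1::nat))"
proof -
  let ?T = "{i - j |i j. (i, j) \<in> set M}"
  let ?S = "?T \<union> {1::nat}"
  have "?T \<subseteq> (\<lambda>p. fst p - snd p) ` set M"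
  proof
    fix x assume "x \<in> ?T"
    then obtain i j where x: "x = i - j" "(i, j) \<in> set M" by blast
    show "x \<in> (\<lambda>p. fst p - snd p) ` set M" by (rule image_eqI[of _ _ "(i, j)"]) (use x in simp_all)
  qed
  then have "finite ?T" by (rule finite_subset) simp
  then have fin: "finite ?S" by simp
  show ?thesis
  proof
    assume h: "1 = Max ?S"
    show "\<forall>p\<in>set M. fst p - snd p \<le> 1"
    proof
      fix p assume pM: "p \<in> set M"
      obtain i j where p: "p = (i, j)" by fastforce
      have "i - j \<in> ?T" using pM p by blast
      then have "fst p - snd p \<in> ?S" using p by simp
      then have "fst p - snd p \<le> Max ?S" by (rule Max_ge[OF fin])
      then show "fst p - snd p \<le> 1" using h by simp
    qed
  next
    assume h: "\<forall>p\<in>set M. fst p - snd p \<le> 1"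
    have b: "\<forall>x\<in>?S. x \<le> 1"
    proof
      fix x assume "x \<in> ?S"
      then consider "x = 1" | i j where "x = i - j" "(i, j) \<in> set M" by blast
      then show "x \<le> 1"
      proof cases
        case 1 then show ?thesis by simp
      next
        case 2 then show ?thesis using h by fastforce
      qed
    qed
    have "Max ?S \<le> 1" using fin b by (subst Max_le_iff) auto
    moreover have "1 \<le> Max ?S" using fin by (intro Max_ge) auto
    ultimately show "1 = Max ?S" by simp
  qed
qed

lemma domz_iff:
  assumes sv: "set v \<subseteq> {0, 1}" and sw: "set w \<subseteq> {0, 1}" and l: "length w = length v"
  shows "dominates_z v w 1 \<longleftrightarrow> w \<in> Adm v"
proof -
  have m: "(\<exists>M. matching v w = Some M \<and> 1 = Max ({i - j |i j. (i, j) \<in> set M} \<union> {1})) \<longleftrightarrow> Gm v w"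
    unfolding matching_def Gm_def good_def max1 ..
  have g: "Gm v w \<longleftrightarrow> w \<in> Adm v" using G_Adm[of v] l sw by blast
  show ?thesis
  proof
    assume "dominates_z v w 1"
    then show "w \<in> Adm v" unfolding dominates_z_def using m g by blast
  next
    assume a: "w \<in> Adm v"
    then have "dominates v w" using Adm_dom[of v] by blast
    moreover have "chi v = v" "chi w = w" using sv sw chi01 by auto
    ultimately show "dominates_z v w 1" unfolding dominates_z_def using m g a l by simp
  qed
qed

lemma cc_chi: "i \<le> length a \<Longrightarrow> (0 < cc a w i) = (0 < cc (chi a) w i)"
proof (induction i)
  case 0
  then show ?case by simp
next
  case (Suc i)
  then have "chi a ! i = (if 0 < a ! i then 1 else 0)" unfolding chi_def by simp
  then show ?case using Suc by auto
qed

lemma Adm_chi: "Adm (chi a) = Adm a"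
proof -
  have "\<And>w k. k < length a \<Longrightarrow> (0 < bb a w (Suc k)) = (0 < bb (chi a) w (Suc k))"
  proof -
    fix w k assume k: "k < length a"
    then have "chi a ! k = (if 0 < a ! k then 1 else 0)" unfolding chi_def by simp
    then show "(0 < bb a w (Suc k)) = (0 < bb (chi a) w (Suc k))" using cc_chi[of k a w] k by auto
  qed
  then have "\<And>w. (\<forall>k<length a. w ! k = 1 \<longrightarrow> 0 < bb (chi a) w (Suc k)) \<longleftrightarrow> (\<forall>k<length a. w ! k = 1 \<longrightarrow> 0 < bb a w (Suc k))"
    by blast
  then show ?thesis unfolding Adm_def length_chi by (simp del: bb.simps)
qed

lemma chi_bvec: "w \<in> Adm a \<Longrightarrow> chi (bvec a w) = w"
proof (rule nth_equalityI)
  assume w: "w \<in> Adm a"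
  then show "length (chi (bvec a w)) = length w" unfolding Adm_def by simp
  fix k assume "k < length (chi (bvec a w))"
  then have k: "k < length a" by simp
  have "chi (bvec a w) ! k = (if 0 < bb a w (Suc k) then 1 else 0)"
    unfolding chi_def using k by (simp add: bvec_nth del: bb.simps)
  then show "chi (bvec a w) ! k = w ! k" using adm_w[OF w k] by (simp del: bb.simps)
qed

lemma fin_ext: "1 \<le> n \<Longrightarrow> length a = n \<Longrightarrow> finite (extreme_points (flow_polytope n m a))"
proof (induction m arbitrary: a)
  case 0
  then show ?case using ext_m0 by simp
next
  case (Suc m)
  show ?case by (rule card_decomp(1)[OF Suc.prems]) (use Suc.IH Suc.prems in simp)
qed

lemma inv_ext:
  "1 \<le> n \<Longrightarrow> length a = n \<Longrightarrow> length a' = n \<Longrightarrow> chi a = chi a' \<Longrightarrow>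
    card (extreme_points (flow_polytope n m a)) = card (extreme_points (flow_polytope n m a'))"
proof (induction m arbitrary: a a')
  case 0
  then show ?case using ext_m0 by simp
next
  case (Suc m)
  have f: "\<forall>w\<in>Adm a. finite (extreme_points (flow_polytope n m (bvec a w)))"
    using fin_ext Suc.prems by simp
  have f': "\<forall>w\<in>Adm a'. finite (extreme_points (flow_polytope n m (bvec a' w)))"
    using fin_ext Suc.prems by simp
  have AA: "Adm a = Adm a'" using Adm_chi[of a] Adm_chi[of a'] Suc.prems by simp
  have "card (extreme_points (flow_polytope n (Suc m) a)) = (\<Sum>w\<in>Adm a. card (extreme_points (flow_polytope n m (bvec a w))))"
    by (rule card_decomp(2)[OF Suc.prems(1,2) f])
  also have "\<dots> = (\<Sum>w\<in>Adm a'. card (extreme_points (flow_polytope n m (bvec a' w))))"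
  proof (rule sum.cong[OF AA])
    fix w assume w': "w \<in> Adm a'"
    then have w: "w \<in> Adm a" using AA by simp
    show "card (extreme_points (flow_polytope n m (bvec a w))) = card (extreme_points (flow_polytope n m (bvec a' w)))"
      by (rule Suc.IH) (use Suc.prems chi_bvec[OF w] chi_bvec[OF w'] in simp_all)
  qed
  also have "\<dots> = card (extreme_points (flow_polytope n (Suc m) a'))"
    by (rule card_decomp(2)[OF Suc.prems(1,3) f', symmetric])
  finally show ?case .
qed

theorem corollary5p17:
  fixes n m :: nat and a :: "nat list"
  assumes "1 \<le> n" and "1 \<le> m" and "length a = n"
  shows "num_vertices n m a =
    (\<Sum>j \<in> {j. length j = n \<and> set j \<subseteq> {0, 1} \<and> dominates_z (chi a) j 1}.
        num_vertices n (m - 1) j)"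
proof -
  obtain m' where m: "m = Suc m'" using assms(2) by (cases m) auto
  have n: "1 \<le> n" and la: "length a = n" using assms by auto
  have J: "{j. length j = n \<and> set j \<subseteq> {0, 1} \<and> dominates_z (chi a) j 1} = Adm a"
  proof -
    have "{j. length j = n \<and> set j \<subseteq> {0, 1} \<and> dominates_z (chi a) j 1} = Adm (chi a)"
    proof (intro set_eqI iffI)
      fix j assume "j \<in> {j. length j = n \<and> set j \<subseteq> {0, 1} \<and> dominates_z (chi a) j 1}"
      then show "j \<in> Adm (chi a)" using domz_iff[OF chi_set, of j] la by auto
    next
      fix j assume j: "j \<in> Adm (chi a)"
      then have "length j = n" "set j \<subseteq> {0, 1}" unfolding Adm_def using la by auto
      then show "j \<in> {j. length j = n \<and> set j \<subseteq> {0, 1} \<and> dominates_z (chi a) j 1}"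
        using domz_iff[OF chi_set, of j] la j by auto
    qed
    then show ?thesis using Adm_chi by simp
  qed
  have f: "\<forall>w\<in>Adm a. finite (extreme_points (flow_polytope n m' (bvec a w)))"
    using fin_ext n la by simp
  have "num_vertices n m a = card (extreme_points (flow_polytope n (Suc m') a))"
    unfolding num_vertices_def m by simp
  also have "\<dots> = (\<Sum>w\<in>Adm a. card (extreme_points (flow_polytope n m' (bvec a w))))"
    by (rule card_decomp(2)[OF n la f])
  also have "\<dots> = (\<Sum>w\<in>Adm a. num_vertices n m' w)"
  proof (rule sum.cong[OF refl])
    fix w assume w: "w \<in> Adm a"
    have lw: "length w = n" and sw: "set w \<subseteq> {0, 1}" using w la unfolding Adm_def by auto
    show "card (extreme_points (flow_polytope n m' (bvec a w))) = num_vertices n m' w"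
    proof (cases "m' = 0")
      case True
      then show ?thesis using ext_m0[OF n] la by (simp add: num_vertices_def)
    next
      case False
      have "card (extreme_points (flow_polytope n m' (bvec a w))) = card (extreme_points (flow_polytope n m' w))"
        by (rule inv_ext) (use n la lw chi_bvec[OF w] chi01[OF sw] in simp_all)
      then show ?thesis using False by (simp add: num_vertices_def)
    qed
  qed
  finally show ?thesis unfolding J m by simp
qed

end
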